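(* Let $S$ be a semilocal generalized Krull domain with maximal ideals $\mathfrak{m}_1, \dots, \mathfrak{m}_n$, where $n \geq 2$ and $\operatorname{ht} \mathfrak{m}_j \geq 2$ for all $j$. Suppose each residue field $S/\mathfrak{m}_i$ is isomorphic to a fixed field $k$, and fix isomorphisms $\alpha_i : k \to S/\mathfrak{m}_i$. Let $J = \mathfrak{m}_1 \cap \cdots \cap \mathfrak{m}_n = \prod_j \mathfrak{m}_j$, let $p: S \to S/J$ be the canonical projection, and let $h : k \to S/J$ be the composition of $\lambda \mapsto (\alpha_1(\lambda), \dots, \alpha_n(\lambda)) \in \prod_{i=1}^n S/\mathfrak{m}_i$ with the Chinese Remainder isomorphism $\prod_i S/\mathfrak{m}_i \cong S/J$. Let $R$ be the pullback of $p$ and $h$, i.e. $R = \{(s,\lambda) \in S \times k : p(s) = h(\lambda)\}$ (identified with a subring of $S$). Then $R$ is local and perinormal; moreover $R$ is globally perinormal if $S$ is. However, $R$ is not integrally closed, since its integral closure is $S$.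
   Context: All rings are commutative with identity; "local" means having a unique maximal ideal; an overring of a domain $R$ is a ring between $R$ and its fraction field. A ring extension $A \subseteq B$ satisfies going-down if whenever $\mathfrak{p} \subset \mathfrak{q}$ are primes of $A$ and $Q$ is a prime of $B$ with $Q \cap A = \mathfrak{q}$, there is a prime $P \subseteq Q$ of $B$ with $P \cap A = \mathfrak{p}$. A domain $R$ is perinormal if every local overring $S$ of $R$ such that $R \subseteq S$ satisfies going-down is a localization of $R$; it is globally perinormal if every overring (local or not) $S$ of $R$ such that $R \subseteq S$ satisfies going-down is a localization of $R$ at a multiplicative set. A ring satisfies (R$_1$) if its localization at every height one prime is a valuation domain. A domain $R$ is a generalized Krull domain if (1) $R = \bigcap_{\mathfrak{p}} R_{\mathfrak{p}}$ over all height one primes $\mathfrak{p}$, (2) every nonzero element lies in only finitely many height one primes, and (3) $R$ satisfies (R$_1$). *)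

theory Defs
  imports "HOL-Algebra.QuotRing"
begin

text \<open>All rings considered are subrings of a fixed ambient field of type 'a.
  Ideals, primes etc. are relative to a subring A.\<close>

definition subring_of :: "'a::field set \<Rightarrow> bool" where
  "subring_of A \<longleftrightarrow> 0 \<in> A \<and> 1 \<in> A \<and> (\<forall>x\<in>A. \<forall>y\<in>A. x + y \<in> A \<and> x - y \<in> A \<and> x * y \<in> A)"

definition ideal_in :: "'a::field set \<Rightarrow> 'a set \<Rightarrow> bool" where
  "ideal_in A I \<longleftrightarrow> I \<subseteq> A \<and> 0 \<in> I \<and> (\<forall>x\<in>I. \<forall>y\<in>I. x + y \<in> I)
     \<and> (\<forall>a\<in>A. \<forall>x\<in>I. a * x \<in> I)"

definition prime_in :: "'a::field set \<Rightarrow> 'a set \<Rightarrow> bool" where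
  "prime_in A P \<longleftrightarrow> ideal_in A P \<and> P \<noteq> A \<and> (\<forall>a\<in>A. \<forall>b\<in>A. a * b \<in> P \<longrightarrow> a \<in> P \<or> b \<in> P)"

definition maximal_in :: "'a::field set \<Rightarrow> 'a set \<Rightarrow> bool" where
  "maximal_in A M \<longleftrightarrow> ideal_in A M \<and> M \<noteq> A \<and>
     (\<forall>J. ideal_in A J \<and> M \<subseteq> J \<longrightarrow> J = M \<or> J = A)"

definition local_ring :: "'a::field set \<Rightarrow> bool" where
  "local_ring A \<longleftrightarrow> (\<exists>!M. maximal_in A M)"

definition height_ge2 :: "'a::field set \<Rightarrow> 'a set \<Rightarrow> bool" where
  "height_ge2 A P \<longleftrightarrow> (\<exists>P0 P1. prime_in A P0 \<and> prime_in A P1 \<and> P0 \<subset> P1 \<and> P1 \<subset> P)"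

definition height_one :: "'a::field set \<Rightarrow> 'a set \<Rightarrow> bool" where
  "height_one A P \<longleftrightarrow> prime_in A P \<and> (\<exists>Q. prime_in A Q \<and> Q \<subset> P) \<and> \<not> height_ge2 A P"

definition frac :: "'a::field set \<Rightarrow> 'a set" where
  "frac A = {a / b | a b. a \<in> A \<and> b \<in> A \<and> b \<noteq> 0}"

definition multiplicative_in :: "'a::field set \<Rightarrow> 'a set \<Rightarrow> bool" where
  "multiplicative_in A M \<longleftrightarrow> M \<subseteq> A \<and> 1 \<in> M \<and> 0 \<notin> M \<and> (\<forall>x\<in>M. \<forall>y\<in>M. x * y \<in> M)"

definition loc :: "'a::field set \<Rightarrow> 'a set \<Rightarrow> 'a set" where
  "loc A M = {a / m | a m. a \<in> A \<and> m \<in> M}"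

definition loc_prime :: "'a::field set \<Rightarrow> 'a set \<Rightarrow> 'a set" where
  "loc_prime A P = loc A (A - P)"

definition overring :: "'a::field set \<Rightarrow> 'a set \<Rightarrow> bool" where
  "overring A T \<longleftrightarrow> subring_of T \<and> A \<subseteq> T \<and> T \<subseteq> frac A"

definition going_down :: "'a::field set \<Rightarrow> 'a set \<Rightarrow> bool" where
  "going_down A B \<longleftrightarrow> (\<forall>p q Q. prime_in A p \<and> prime_in A q \<and> p \<subset> q \<and>
      prime_in B Q \<and> Q \<inter> A = q \<longrightarrow> (\<exists>P. prime_in B P \<and> P \<subseteq> Q \<and> P \<inter> A = p))"

definition perinormal :: "'a::field set \<Rightarrow> bool" where
  "perinormal A \<longleftrightarrow> subring_of A \<and> (\<forall>T. overring A T \<and> local_ring T \<and> going_down A T \<longrightarrow>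
      (\<exists>P. prime_in A P \<and> T = loc_prime A P))"

definition globally_perinormal :: "'a::field set \<Rightarrow> bool" where
  "globally_perinormal A \<longleftrightarrow> subring_of A \<and> (\<forall>T. overring A T \<and> going_down A T \<longrightarrow>
      (\<exists>M. multiplicative_in A M \<and> T = loc A M))"

definition valuation_domain :: "'a::field set \<Rightarrow> bool" where
  "valuation_domain V \<longleftrightarrow> subring_of V \<and> (\<forall>x\<in>frac V. x \<noteq> 0 \<longrightarrow> x \<in> V \<or> inverse x \<in> V)"

definition R1 :: "'a::field set \<Rightarrow> bool" where
  "R1 A \<longleftrightarrow> (\<forall>P. height_one A P \<longrightarrow> valuation_domain (loc_prime A P))"

definition gen_krull :: "'a::field set \<Rightarrow> bool" where
  "gen_krull A \<longleftrightarrow> subring_of A \<and>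
     A = frac A \<inter> \<Inter>{loc_prime A P | P. height_one A P} \<and>
     (\<forall>x\<in>A. x \<noteq> 0 \<longrightarrow> finite {P. height_one A P \<and> x \<in> P}) \<and>
     R1 A"

definition integral_over :: "'a::field set \<Rightarrow> 'a \<Rightarrow> bool" where
  "integral_over A x \<longleftrightarrow> (\<exists>n::nat. \<exists>c. (\<forall>i<n. c i \<in> A) \<and> x ^ n + (\<Sum>i<n. c i * x ^ i) = 0)"

definition integral_closure :: "'a::field set \<Rightarrow> 'a set" where
  "integral_closure A = {x \<in> frac A. integral_over A x}"

definition integrally_closed :: "'a::field set \<Rightarrow> bool" where
  "integrally_closed A \<longleftrightarrow> integral_closure A = A"

definition ringS :: "'a::field set \<Rightarrow> 'a ring" where
  "ringS A = \<lparr>carrier = A, monoid.mult = (*), one = 1, zero = 0, add = (+)\<rparr>"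

text \<open>The pullback of p : S -> S/J and h : k -> S/J, identified with a subring of S.
  Via the Chinese Remainder isomorphism, p(s) = h(lambda) iff s + m_i = alpha_i(lambda) for all i.\<close>
definition pullback_ring ::
  "'a::field set \<Rightarrow> nat \<Rightarrow> (nat \<Rightarrow> 'a set) \<Rightarrow> (nat \<Rightarrow> 'b::field \<Rightarrow> 'a set) \<Rightarrow> 'a set" where
  "pullback_ring S n m \<alpha> = {s \<in> S. \<exists>c. \<forall>i<n. m i +>\<^bsub>ringS S\<^esub> s = \<alpha> i c}"

end

theory Submission
  imports Defs "HOL-Computational_Algebra.Polynomial"
begin


lemma sub_simps:
  assumes "subring_of A"
  shows "0 \<in> A" "1 \<in> A"
    "x \<in> A \<Longrightarrow> y \<in> A \<Longrightarrow> x + y \<in> A"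
    "x \<in> A \<Longrightarrow> y \<in> A \<Longrightarrow> x - y \<in> A"
    "x \<in> A \<Longrightarrow> y \<in> A \<Longrightarrow> x * y \<in> A"
  using assms unfolding subring_of_def by auto

lemma sub_neg: "subring_of A \<Longrightarrow> x \<in> A \<Longrightarrow> - x \<in> A"
  using sub_simps(4)[of A 0 x] sub_simps(1)[of A] by simp

lemma sub_pow: "subring_of A \<Longrightarrow> x \<in> A \<Longrightarrow> x ^ k \<in> A"
  by (induction k) (auto simp: sub_simps)

lemma sub_sum: "subring_of A \<Longrightarrow> (\<And>i. i \<in> I \<Longrightarrow> f i \<in> A) \<Longrightarrow> sum f I \<in> A"
  by (induction I rule: infinite_finite_induct) (auto simp: sub_simps)

lemma sub_prod: "subring_of A \<Longrightarrow> (\<And>i. i \<in> I \<Longrightarrow> f i \<in> A) \<Longrightarrow> prod f I \<in> A"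
  by (induction I rule: infinite_finite_induct) (auto simp: sub_simps)

lemma ideal_simps:
  assumes "ideal_in A I"
  shows "I \<subseteq> A" "0 \<in> I" "x \<in> I \<Longrightarrow> y \<in> I \<Longrightarrow> x + y \<in> I"
    "a \<in> A \<Longrightarrow> x \<in> I \<Longrightarrow> a * x \<in> I"
    "a \<in> A \<Longrightarrow> x \<in> I \<Longrightarrow> x * a \<in> I"
  using assms unfolding ideal_in_def by (auto simp: mult.commute)

lemma ideal_neg: "subring_of A \<Longrightarrow> ideal_in A I \<Longrightarrow> x \<in> I \<Longrightarrow> - x \<in> I"
  using ideal_simps(4)[of A I "-1" x] sub_neg[of A 1] sub_simps(2)[of A] by simp

lemma ideal_diff: "subring_of A \<Longrightarrow> ideal_in A I \<Longrightarrow> x \<in> I \<Longrightarrow> y \<in> I \<Longrightarrow> x - y \<in> I"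
  using ideal_simps(3)[of A I x "-y"] ideal_neg[of A I y] by simp

lemma ideal_prod:
  assumes "subring_of A" "ideal_in A I" "finite K" "k \<in> K" "f k \<in> I" "\<And>i. i \<in> K \<Longrightarrow> f i \<in> A"
  shows "prod f K \<in> I"
proof -
  have "prod f K = f k * prod f (K - {k})" using assms(3,4) by (simp add: prod.remove)
  moreover have "prod f (K - {k}) \<in> A" using assms by (intro sub_prod) auto
  ultimately show ?thesis using ideal_simps(5)[OF assms(2)] assms(5) by simp
qed

lemma ideal_one: "subring_of A \<Longrightarrow> ideal_in A I \<Longrightarrow> 1 \<in> I \<Longrightarrow> I = A"
proof -
  assume a: "subring_of A" "ideal_in A I" "1 \<in> I"
  { fix x assume "x \<in> A" then have "1 * x \<in> I" using ideal_simps(5)[OF a(2)] a(3) by blast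
    then have "x \<in> I" by simp }
  then show ?thesis using ideal_simps(1)[OF a(2)] by blast
qed

lemma prime_one: "subring_of A \<Longrightarrow> prime_in A P \<Longrightarrow> 1 \<notin> P"
  unfolding prime_in_def using ideal_one by blast

lemma prime_ideal: "prime_in A P \<Longrightarrow> ideal_in A P"
  unfolding prime_in_def by blast

lemma prime_mult: "prime_in A P \<Longrightarrow> a \<in> A \<Longrightarrow> b \<in> A \<Longrightarrow> a * b \<in> P \<Longrightarrow> a \<in> P \<or> b \<in> P"
  unfolding prime_in_def by blast

lemma prime_pow: "prime_in A P \<Longrightarrow> subring_of A \<Longrightarrow> a \<in> A \<Longrightarrow> a \<notin> P \<Longrightarrow> a ^ k \<notin> P"
proof (induction k)
  case 0 then show ?case using prime_one by force
next
  case (Suc k)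
  then have "a ^ k \<in> A" using sub_pow by blast
  then show ?case using Suc prime_mult[of A P a "a ^ k"] by auto
qed

lemma prime_prod:
  assumes "subring_of A" "prime_in A P" "\<And>i. i \<in> K \<Longrightarrow> f i \<in> A - P"
  shows "prod f K \<in> A - P"
  using assms(3)
proof (induction K rule: infinite_finite_induct)
  case (infinite K) then show ?case using assms prime_one sub_simps by auto
next
  case empty then show ?case using assms prime_one sub_simps by auto
next
  case (insert x F)
  then have "f x \<in> A - P" "prod f F \<in> A - P" by auto
  then show ?case using insert prime_mult[OF assms(2), of "f x" "prod f F"] sub_simps(5)[OF assms(1)] by auto
qed


lemma frac_mem: "a \<in> A \<Longrightarrow> b \<in> A \<Longrightarrow> b \<noteq> 0 \<Longrightarrow> x = a / b \<Longrightarrow> x \<in> Defs.frac A"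
  unfolding Defs.frac_def by blast

lemma frac_sub: "subring_of A \<Longrightarrow> A \<subseteq> Defs.frac A"
proof
  fix x assume "subring_of A" "x \<in> A"
  then show "x \<in> Defs.frac A" using sub_simps(2) by (intro frac_mem[of x A 1]) auto
qed

lemma frac_mono: "A \<subseteq> B \<Longrightarrow> Defs.frac A \<subseteq> Defs.frac B"
  unfolding Defs.frac_def by blast

lemma loc_mem: "a \<in> A \<Longrightarrow> m \<in> M \<Longrightarrow> x = a / m \<Longrightarrow> x \<in> loc A M"
  unfolding loc_def by blast

lemma loc_sub: "multiplicative_in A M \<Longrightarrow> A \<subseteq> loc A M"
proof
  fix x assume "multiplicative_in A M" "x \<in> A"
  then show "x \<in> loc A M" unfolding multiplicative_in_def by (intro loc_mem[of x A 1]) auto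
qed

lemma loc_inv: "m \<in> M \<Longrightarrow> subring_of A \<Longrightarrow> inverse m \<in> loc A M"
  by (rule loc_mem[of 1]) (auto simp: sub_simps divide_inverse)

lemma loc_subring:
  assumes "subring_of A" "multiplicative_in A M"
  shows "subring_of (loc A M)"
proof -
  have M: "M \<subseteq> A" "1 \<in> M" "0 \<notin> M" "\<And>x y. x \<in> M \<Longrightarrow> y \<in> M \<Longrightarrow> x * y \<in> M"
    using assms(2) unfolding multiplicative_in_def by auto
  have 0: "0 \<in> loc A M" and 1: "1 \<in> loc A M" using loc_sub[OF assms(2)] sub_simps(1,2)[OF assms(1)] by auto
  have "x + y \<in> loc A M \<and> x - y \<in> loc A M \<and> x * y \<in> loc A M" if xy: "x \<in> loc A M" "y \<in> loc A M" for x y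
  proof -
    obtain a u where au: "a \<in> A" "u \<in> M" "x = a / u" using xy(1) unfolding loc_def by blast
    obtain b v where bv: "b \<in> A" "v \<in> M" "y = b / v" using xy(2) unfolding loc_def by blast
    have uv: "u \<noteq> 0" "v \<noteq> 0" "u \<in> A" "v \<in> A" using au bv M by auto
    have e1: "x + y = (a * v + b * u) / (u * v)" using au bv uv by (simp add: field_simps)
    have e2: "x - y = (a * v - b * u) / (u * v)" using au bv uv by (simp add: field_simps)
    have e3: "x * y = (a * b) / (u * v)" using au bv by simp
    have m: "u * v \<in> M" using M(4) au bv by blast
    have "a * v + b * u \<in> A" "a * v - b * u \<in> A" "a * b \<in> A"
      using au bv uv sub_simps(3,4,5)[OF assms(1)] by auto
    then show ?thesis using loc_mem[OF _ m e1] loc_mem[OF _ m e2] loc_mem[OF _ m e3] by blast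
  qed
  then show ?thesis unfolding subring_of_def using 0 1 by blast
qed

lemma prime_mult_set: "subring_of A \<Longrightarrow> prime_in A P \<Longrightarrow> multiplicative_in A (A - P)"
proof -
  assume a: "subring_of A" "prime_in A P"
  have "0 \<in> P" using ideal_simps(2)[OF prime_ideal[OF a(2)]] .
  moreover have "1 \<notin> P" using prime_one[OF a] .
  moreover have "\<forall>x\<in>A - P. \<forall>y\<in>A - P. x * y \<in> A - P"
    using prime_mult[OF a(2)] sub_simps(5)[OF a(1)] by blast
  ultimately show ?thesis unfolding multiplicative_in_def using sub_simps(2)[OF a(1)] by blast
qed

lemma loc_prime_subring: "subring_of A \<Longrightarrow> prime_in A P \<Longrightarrow> subring_of (loc_prime A P)"
  unfolding loc_prime_def by (intro loc_subring prime_mult_set)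

lemma loc_prime_sub: "subring_of A \<Longrightarrow> prime_in A P \<Longrightarrow> A \<subseteq> loc_prime A P"
  unfolding loc_prime_def by (intro loc_sub prime_mult_set)

lemma loc_prime_inv: "subring_of A \<Longrightarrow> u \<in> A \<Longrightarrow> u \<notin> P \<Longrightarrow> inverse u \<in> loc_prime A P"
  unfolding loc_prime_def by (intro loc_inv) auto

lemma zero_prime: "subring_of A \<Longrightarrow> prime_in A {0}"
proof -
  assume a: "subring_of A"
  have "ideal_in A {0}" unfolding ideal_in_def using sub_simps(1)[OF a] by simp
  moreover have "{0} \<noteq> A" using sub_simps(2)[OF a] by auto
  ultimately show ?thesis unfolding prime_in_def by simp
qed


lemma ideal_Union_chain:
  assumes "subring_of A" "C \<noteq> {}" "\<And>K. K \<in> C \<Longrightarrow> ideal_in A K \<and> 1 \<notin> K"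
    "\<And>K L. K \<in> C \<Longrightarrow> L \<in> C \<Longrightarrow> K \<subseteq> L \<or> L \<subseteq> K"
  shows "ideal_in A (\<Union>C) \<and> 1 \<notin> \<Union>C"
proof -
  have "\<Union>C \<subseteq> A" using assms(3) ideal_simps(1) by blast
  moreover have "0 \<in> \<Union>C" using assms(2,3) ideal_simps(2) by blast
  moreover have "\<forall>x\<in>\<Union>C. \<forall>y\<in>\<Union>C. x + y \<in> \<Union>C"
  proof (intro ballI)
    fix x y assume "x \<in> \<Union>C" "y \<in> \<Union>C"
    then obtain K L where KL: "K \<in> C" "L \<in> C" "x \<in> K" "y \<in> L" by auto
    show "x + y \<in> \<Union>C"
    proof (cases "K \<subseteq> L")
      case True
      then have "x + y \<in> L" using KL assms(3)[of L] ideal_simps(3) by blast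
      then show ?thesis using KL by blast
    next
      case False
      then have "L \<subseteq> K" using assms(4) KL by blast
      then have "x + y \<in> K" using KL assms(3)[of K] ideal_simps(3) by blast
      then show ?thesis using KL by blast
    qed
  qed
  moreover have "\<forall>a\<in>A. \<forall>x\<in>\<Union>C. a * x \<in> \<Union>C"
  proof (intro ballI)
    fix a x assume "a \<in> A" "x \<in> \<Union>C"
    then obtain K where "K \<in> C" "x \<in> K" by auto
    then show "a * x \<in> \<Union>C" using assms(3)[of K] ideal_simps(4) \<open>a \<in> A\<close> by blast
  qed
  moreover have "1 \<notin> \<Union>C" using assms(3) by blast
  ultimately show ?thesis unfolding ideal_in_def by blast
qed

lemma zorn_maximal:
  assumes "subring_of A" "ideal_in A I" "1 \<notin> I"
  shows "\<exists>M. maximal_in A M \<and> I \<subseteq> M"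
proof -
  define \<II> where "\<II> = {K. ideal_in A K \<and> 1 \<notin> K \<and> I \<subseteq> K}"
  have "\<forall>C\<in>chains \<II>. \<exists>U\<in>\<II>. \<forall>X\<in>C. X \<subseteq> U"
  proof
    fix C assume C: "C \<in> chains \<II>"
    show "\<exists>U\<in>\<II>. \<forall>X\<in>C. X \<subseteq> U"
    proof (cases "C = {}")
      case True then show ?thesis using assms unfolding \<II>_def by auto
    next
      case False
      have CI: "C \<subseteq> \<II>" and Cch: "\<And>K L. K \<in> C \<Longrightarrow> L \<in> C \<Longrightarrow> K \<subseteq> L \<or> L \<subseteq> K"
        using C unfolding chains_def chain_subset_def by blast+
      have "ideal_in A (\<Union>C) \<and> 1 \<notin> \<Union>C"
        using CI Cch False by (intro ideal_Union_chain[OF assms(1)]) (auto simp: \<II>_def)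
      moreover have "I \<subseteq> \<Union>C" using False CI by (auto simp: \<II>_def)
      ultimately have "\<Union>C \<in> \<II>" unfolding \<II>_def by blast
      then show ?thesis by blast
    qed
  qed
  then obtain M where M: "M \<in> \<II>" "\<forall>X\<in>\<II>. M \<subseteq> X \<longrightarrow> X = M" using Zorn_Lemma2 by blast
  have "maximal_in A M"
    unfolding maximal_in_def
  proof (intro conjI allI impI)
    show "ideal_in A M" using M \<II>_def by auto
    show "M \<noteq> A" using M \<II>_def sub_simps(2)[OF assms(1)] by auto
    fix K assume K: "ideal_in A K \<and> M \<subseteq> K"
    show "K = M \<or> K = A"
    proof (cases "1 \<in> K")
      case True then show ?thesis using ideal_one[OF assms(1)] K by blast
    next
      case False
      then have "K \<in> \<II>" using K M(1) unfolding \<II>_def by blast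
      then show ?thesis using M(2) K by blast
    qed
  qed
  then show ?thesis using M \<II>_def by auto
qed

lemma maximal_prime:
  assumes "subring_of A" "maximal_in A M"
  shows "prime_in A M"
proof -
  have I: "ideal_in A M" "M \<noteq> A" using assms unfolding maximal_in_def by auto
  note S = sub_simps[OF assms(1)]
  note II = ideal_simps[OF I(1)]
  have "a \<in> M \<or> b \<in> M" if ab: "a \<in> A" "b \<in> A" "a * b \<in> M" for a b
  proof (rule ccontr)
    assume nab: "\<not> (a \<in> M \<or> b \<in> M)"
    define K where "K = {x + a * t | x t. x \<in> M \<and> t \<in> A}"
    have Kmem: "x \<in> M \<Longrightarrow> t \<in> A \<Longrightarrow> x + a * t \<in> K" for x t unfolding K_def by blast
    have "ideal_in A K" unfolding ideal_in_def
    proof (intro conjI ballI)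
      show "K \<subseteq> A"
      proof
        fix y assume "y \<in> K"
        then obtain x t where "y = x + a * t" "x \<in> M" "t \<in> A" unfolding K_def by blast
        then show "y \<in> A" using S(3,5) II(1) ab(1) by blast
      qed
      show "0 \<in> K" using Kmem[of 0 0] II(2) S(1) by simp
      fix x y assume "x \<in> K" "y \<in> K"
      then obtain x1 t1 x2 t2 where "x = x1 + a * t1" "y = x2 + a * t2" "x1 \<in> M" "x2 \<in> M" "t1 \<in> A" "t2 \<in> A"
        unfolding K_def by blast
      moreover then have "x + y = (x1 + x2) + a * (t1 + t2)" by (simp add: algebra_simps)
      ultimately show "x + y \<in> K" using Kmem II(3) S(3) by metis
    next
      fix r x assume "r \<in> A" "x \<in> K"
      then obtain x1 t1 where "x = x1 + a * t1" "x1 \<in> M" "t1 \<in> A" unfolding K_def by blast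
      moreover then have "r * x = r * x1 + a * (r * t1)" by (simp add: algebra_simps)
      ultimately show "r * x \<in> K" using Kmem II(4) S(5) \<open>r \<in> A\<close> by metis
    qed
    moreover have "M \<subseteq> K" using Kmem[of _ 0] S(1) by fastforce
    moreover have "a \<in> K" using Kmem[of 0 1] II(2) S(2) by simp
    ultimately have "K = A" using assms(2) nab unfolding maximal_in_def by blast
    then have "1 \<in> K" using S(2) by simp
    then obtain x t where xt: "1 = x + a * t" "x \<in> M" "t \<in> A" unfolding K_def by blast
    then have "b = x * b + (a * b) * t" by (metis mult.commute mult.left_commute mult_1 distrib_right)
    moreover have "x * b \<in> M" using II(5) xt(2) ab(2) by blast
    moreover have "(a * b) * t \<in> M" using II(5) xt(3) ab(3) by blast
    ultimately have "b \<in> M" using II(3) by metis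
    then show False using nab by blast
  qed
  then show ?thesis unfolding prime_in_def using I by blast
qed

lemma nonunit_in_maximal:
  assumes "subring_of A" "x \<in> A" "inverse x \<notin> A"
  shows "\<exists>M. maximal_in A M \<and> x \<in> M"
proof -
  note S = sub_simps[OF assms(1)]
  define I where "I = {x * a | a. a \<in> A}"
  have Imem: "a \<in> A \<Longrightarrow> x * a \<in> I" for a unfolding I_def by blast
  have "ideal_in A I" unfolding ideal_in_def
  proof (intro conjI ballI)
    show "I \<subseteq> A" unfolding I_def using assms(2) S(5) by blast
    show "0 \<in> I" using Imem[of 0] S(1) by simp
    fix u v assume "u \<in> I" "v \<in> I"
    then obtain a b where "u = x * a" "v = x * b" "a \<in> A" "b \<in> A" unfolding I_def by auto
    then show "u + v \<in> I" using Imem[of "a + b"] S(3) by (simp add: distrib_left)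
  next
    fix r u assume "r \<in> A" "u \<in> I"
    then obtain a where "u = x * a" "a \<in> A" unfolding I_def by auto
    then show "r * u \<in> I" using Imem[of "r * a"] S(5) \<open>r \<in> A\<close> by (simp add: algebra_simps)
  qed
  moreover have "1 \<notin> I"
  proof
    assume "1 \<in> I"
    then obtain a where "1 = x * a" "a \<in> A" unfolding I_def by auto
    then have "inverse x = a" by (metis inverse_unique)
    then show False using assms \<open>a \<in> A\<close> by simp
  qed
  moreover have "x \<in> I" using Imem[of 1] S(2) by simp
  ultimately show ?thesis using zorn_maximal[OF assms(1)] by blast
qed

lemma local_unit:
  assumes "subring_of A" "maximal_in A N" "local_ring A" "x \<in> A" "x \<notin> N"
  shows "inverse x \<in> A"
  using nonunit_in_maximal[OF assms(1,4)] assms(2,3,5) unfolding local_ring_def by blast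


lemma ringS_simps: "carrier (ringS A) = A" "monoid.mult (ringS A) = (*)" "one (ringS A) = 1"
  "zero (ringS A) = 0" "add (ringS A) = (+)"
  by (simp_all add: ringS_def)

lemma rcosS: "I +>\<^bsub>ringS A\<^esub> s = {h + s | h. h \<in> I}"
  unfolding a_r_coset_def r_coset_def by (auto simp: ringS_def)

lemma rcos_eq:
  assumes "subring_of A" "ideal_in A I" "s \<in> A" "s' \<in> A"
  shows "I +>\<^bsub>ringS A\<^esub> s = I +>\<^bsub>ringS A\<^esub> s' \<longleftrightarrow> s - s' \<in> I"
proof
  assume "I +>\<^bsub>ringS A\<^esub> s = I +>\<^bsub>ringS A\<^esub> s'"
  moreover have "s \<in> I +>\<^bsub>ringS A\<^esub> s" unfolding rcosS using ideal_simps(2)[OF assms(2)] by force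
  ultimately obtain h where "h \<in> I" "s = h + s'" unfolding rcosS by auto
  then show "s - s' \<in> I" by simp
next
  assume d: "s - s' \<in> I"
  show "I +>\<^bsub>ringS A\<^esub> s = I +>\<^bsub>ringS A\<^esub> s'"
  proof
    show "I +>\<^bsub>ringS A\<^esub> s \<subseteq> I +>\<^bsub>ringS A\<^esub> s'"
    proof
      fix y assume "y \<in> I +>\<^bsub>ringS A\<^esub> s"
      then obtain h where h: "h \<in> I" "y = h + s" unfolding rcosS by auto
      then have "h + (s - s') \<in> I" "y = (h + (s - s')) + s'" using ideal_simps(3)[OF assms(2)] d by auto
      then show "y \<in> I +>\<^bsub>ringS A\<^esub> s'" unfolding rcosS by blast
    qed
    show "I +>\<^bsub>ringS A\<^esub> s' \<subseteq> I +>\<^bsub>ringS A\<^esub> s"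
    proof
      fix y assume "y \<in> I +>\<^bsub>ringS A\<^esub> s'"
      then obtain h where h: "h \<in> I" "y = h + s'" unfolding rcosS by auto
      have "- (s - s') \<in> I" using ideal_neg[OF assms(1,2) d] .
      then have "h + - (s - s') \<in> I" "y = (h + - (s - s')) + s" using ideal_simps(3)[OF assms(2)] h by auto
      then show "y \<in> I +>\<^bsub>ringS A\<^esub> s" unfolding rcosS by blast
    qed
  qed
qed

lemma quot_carrier: "carrier (ringS A Quot I) = {I +>\<^bsub>ringS A\<^esub> s | s. s \<in> A}"
  unfolding FactRing_def A_RCOSETS_def RCOSETS_def a_r_coset_def by (auto simp: ringS_def)

lemma quot_one: "one (ringS A Quot I) = I +>\<^bsub>ringS A\<^esub> 1"
  unfolding FactRing_def by (simp add: ringS_def)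

lemma quot_add:
  assumes "subring_of A" "ideal_in A I" "x \<in> A" "y \<in> A"
  shows "add (ringS A Quot I) (I +>\<^bsub>ringS A\<^esub> x) (I +>\<^bsub>ringS A\<^esub> y) = I +>\<^bsub>ringS A\<^esub> (x + y)"
proof -
  have "add (ringS A Quot I) (I +>\<^bsub>ringS A\<^esub> x) (I +>\<^bsub>ringS A\<^esub> y) =
     (\<Union>a\<in>I +>\<^bsub>ringS A\<^esub> x. \<Union>b\<in>I +>\<^bsub>ringS A\<^esub> y. {a + b})"
    unfolding FactRing_def set_add_def set_mult_def by (simp add: ringS_def)
  also have "\<dots> = I +>\<^bsub>ringS A\<^esub> (x + y)"
  proof
    show "(\<Union>a\<in>I +>\<^bsub>ringS A\<^esub> x. \<Union>b\<in>I +>\<^bsub>ringS A\<^esub> y. {a + b}) \<subseteq> I +>\<^bsub>ringS A\<^esub> (x + y)"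
    proof
      fix z assume "z \<in> (\<Union>a\<in>I +>\<^bsub>ringS A\<^esub> x. \<Union>b\<in>I +>\<^bsub>ringS A\<^esub> y. {a + b})"
      then obtain h h' where "h \<in> I" "h' \<in> I" "z = (h + x) + (h' + y)" unfolding rcosS by auto
      moreover then have "z = (h + h') + (x + y)" "h + h' \<in> I" using ideal_simps(3)[OF assms(2)] by auto
      ultimately show "z \<in> I +>\<^bsub>ringS A\<^esub> (x + y)" unfolding rcosS by blast
    qed
    show "I +>\<^bsub>ringS A\<^esub> (x + y) \<subseteq> (\<Union>a\<in>I +>\<^bsub>ringS A\<^esub> x. \<Union>b\<in>I +>\<^bsub>ringS A\<^esub> y. {a + b})"
    proof
      fix z assume "z \<in> I +>\<^bsub>ringS A\<^esub> (x + y)"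
      then obtain h where h: "h \<in> I" "z = h + (x + y)" unfolding rcosS by auto
      have "h + x \<in> I +>\<^bsub>ringS A\<^esub> x" "0 + y \<in> I +>\<^bsub>ringS A\<^esub> y"
        unfolding rcosS using h ideal_simps(2)[OF assms(2)] by blast+
      moreover have "z = (h + x) + (0 + y)" using h by simp
      ultimately show "z \<in> (\<Union>a\<in>I +>\<^bsub>ringS A\<^esub> x. \<Union>b\<in>I +>\<^bsub>ringS A\<^esub> y. {a + b})" by blast
    qed
  qed
  finally show ?thesis .
qed

lemma quot_mult:
  assumes "subring_of A" "ideal_in A I" "x \<in> A" "y \<in> A"
  shows "monoid.mult (ringS A Quot I) (I +>\<^bsub>ringS A\<^esub> x) (I +>\<^bsub>ringS A\<^esub> y) = I +>\<^bsub>ringS A\<^esub> (x * y)"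
proof -
  have "monoid.mult (ringS A Quot I) (I +>\<^bsub>ringS A\<^esub> x) (I +>\<^bsub>ringS A\<^esub> y) =
     (\<Union>a\<in>I +>\<^bsub>ringS A\<^esub> x. \<Union>b\<in>I +>\<^bsub>ringS A\<^esub> y. I +>\<^bsub>ringS A\<^esub> (a * b))"
    unfolding FactRing_def rcoset_mult_def by (simp add: ringS_def)
  also have "\<dots> = I +>\<^bsub>ringS A\<^esub> (x * y)"
  proof -
    have "I +>\<^bsub>ringS A\<^esub> (a * b) = I +>\<^bsub>ringS A\<^esub> (x * y)"
      if "a \<in> I +>\<^bsub>ringS A\<^esub> x" "b \<in> I +>\<^bsub>ringS A\<^esub> y" for a b
    proof -
      from that(1) obtain h where "h \<in> I" "a = h + x" unfolding rcosS by blast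
      moreover from that(2) obtain h' where "h' \<in> I" "b = h' + y" unfolding rcosS by blast
      ultimately have hh: "h \<in> I" "h' \<in> I" "a = h + x" "b = h' + y" by auto
      have hA: "h \<in> A" "h' \<in> A" using hh ideal_simps(1)[OF assms(2)] by auto
      have "a * b - x * y = h * h' + (h * y + x * h')" using hh by (simp add: algebra_simps)
      moreover have "h * h' \<in> I" "h * y \<in> I" "x * h' \<in> I"
        using hh hA assms ideal_simps(4,5)[OF assms(2)] by auto
      ultimately have "a * b - x * y \<in> I" using ideal_simps(3)[OF assms(2)] by metis
      moreover have "a * b \<in> A" using hA hh assms sub_simps(3,5)[OF assms(1)] by auto
      ultimately show ?thesis using rcos_eq[OF assms(1,2)] sub_simps(5)[OF assms(1)] assms(3,4) by blast
    qed
    moreover have "x \<in> I +>\<^bsub>ringS A\<^esub> x" "y \<in> I +>\<^bsub>ringS A\<^esub> y"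
      unfolding rcosS using ideal_simps(2)[OF assms(2)] by force+
    ultimately show ?thesis by blast
  qed
  finally show ?thesis by simp
qed


locale pb =
  fixes S :: "'a::field set" and n :: nat and m :: "nat \<Rightarrow> 'a set"
    and \<alpha> :: "nat \<Rightarrow> 'b::field \<Rightarrow> 'a set"
  assumes gk: "gen_krull S"
    and n2: "n \<ge> 2"
    and minj: "inj_on m {..<n}"
    and maxs: "{M. maximal_in S M} = m ` {..<n}"
    and ht: "\<forall>j<n. height_ge2 S (m j)"
    and iso: "\<forall>i<n. \<alpha> i \<in> ring_iso (ringS (UNIV :: 'b set)) (ringS S Quot m i)"
begin

lemma subS: "subring_of S" using gk unfolding gen_krull_def by blast

lemmas SS = sub_simps[OF subS]

lemma mmax: "i < n \<Longrightarrow> maximal_in S (m i)" using maxs by blast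

lemma max_iff: "maximal_in S M \<longleftrightarrow> (\<exists>i<n. M = m i)" using maxs by blast

lemma mideal: "i < n \<Longrightarrow> ideal_in S (m i)" using mmax unfolding maximal_in_def by blast

lemma mprime: "i < n \<Longrightarrow> prime_in S (m i)" using maximal_prime[OF subS mmax] .

lemma mone: "i < n \<Longrightarrow> 1 \<notin> m i" using prime_one[OF subS mprime] .

lemma msub: "i < n \<Longrightarrow> m i \<subseteq> S" using ideal_simps(1)[OF mideal] .

lemma mdist: "i < n \<Longrightarrow> j < n \<Longrightarrow> i \<noteq> j \<Longrightarrow> m i \<noteq> m j"
  using minj unfolding inj_on_def by blast

definition rho :: "nat \<Rightarrow> 'a \<Rightarrow> 'b" where
  "rho i s = (THE c. \<alpha> i c = m i +>\<^bsub>ringS S\<^esub> s)"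

lemma alpha_bij: "i < n \<Longrightarrow> bij_betw (\<alpha> i) UNIV (carrier (ringS S Quot m i))"
  using iso unfolding ring_iso_def by (auto simp: ringS_def)

lemma alpha_hom: "i < n \<Longrightarrow> \<alpha> i \<in> ring_hom (ringS (UNIV :: 'b set)) (ringS S Quot m i)"
  using iso unfolding ring_iso_def by auto

lemma alpha_mult: "i < n \<Longrightarrow> \<alpha> i (c * d) = monoid.mult (ringS S Quot m i) (\<alpha> i c) (\<alpha> i d)"
  using alpha_hom unfolding ring_hom_def by (auto simp: ringS_def)

lemma alpha_add: "i < n \<Longrightarrow> \<alpha> i (c + d) = add (ringS S Quot m i) (\<alpha> i c) (\<alpha> i d)"
  using alpha_hom unfolding ring_hom_def by (auto simp: ringS_def)

lemma alpha_one: "i < n \<Longrightarrow> \<alpha> i 1 = one (ringS S Quot m i)"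
  using alpha_hom unfolding ring_hom_def by (auto simp: ringS_def)

lemma alpha_inj: "i < n \<Longrightarrow> \<alpha> i c = \<alpha> i d \<Longrightarrow> c = d"
  using alpha_bij unfolding bij_betw_def inj_on_def by blast

lemma rho_ex: "i < n \<Longrightarrow> s \<in> S \<Longrightarrow> \<exists>c. \<alpha> i c = m i +>\<^bsub>ringS S\<^esub> s"
proof -
  assume "i < n" "s \<in> S"
  then have "m i +>\<^bsub>ringS S\<^esub> s \<in> carrier (ringS S Quot m i)" unfolding quot_carrier by blast
  then show ?thesis using alpha_bij[OF \<open>i < n\<close>] unfolding bij_betw_def by (metis imageE)
qed

lemma rho: "i < n \<Longrightarrow> s \<in> S \<Longrightarrow> \<alpha> i (rho i s) = m i +>\<^bsub>ringS S\<^esub> s"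
proof -
  assume a: "i < n" "s \<in> S"
  obtain c where c: "\<alpha> i c = m i +>\<^bsub>ringS S\<^esub> s" using rho_ex[OF a] by blast
  have "\<exists>!c. \<alpha> i c = m i +>\<^bsub>ringS S\<^esub> s"
  proof (rule ex1I[of _ c])
    show "\<alpha> i c = m i +>\<^bsub>ringS S\<^esub> s" by (rule c)
    fix d assume "\<alpha> i d = m i +>\<^bsub>ringS S\<^esub> s"
    then show "d = c" using alpha_inj[OF a(1)] c by simp
  qed
  then show ?thesis unfolding rho_def by (rule theI')
qed

lemma rho_unique: "i < n \<Longrightarrow> s \<in> S \<Longrightarrow> \<alpha> i c = m i +>\<^bsub>ringS S\<^esub> s \<Longrightarrow> rho i s = c"
proof -
  assume a: "i < n" "s \<in> S" "\<alpha> i c = m i +>\<^bsub>ringS S\<^esub> s"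
  then have "\<alpha> i (rho i s) = \<alpha> i c" using rho[OF a(1,2)] by simp
  then show ?thesis using alpha_inj[OF a(1)] by blast
qed

lemma rho_add: "i < n \<Longrightarrow> x \<in> S \<Longrightarrow> y \<in> S \<Longrightarrow> rho i (x + y) = rho i x + rho i y"
  by (rule rho_unique) (auto simp: alpha_add rho quot_add[OF subS mideal] SS)

lemma rho_mult: "i < n \<Longrightarrow> x \<in> S \<Longrightarrow> y \<in> S \<Longrightarrow> rho i (x * y) = rho i x * rho i y"
  by (rule rho_unique) (auto simp: alpha_mult rho quot_mult[OF subS mideal] SS)

lemma rho_one: "i < n \<Longrightarrow> rho i 1 = 1"
  by (rule rho_unique) (auto simp: alpha_one quot_one SS)

lemma rho_zero: "i < n \<Longrightarrow> rho i 0 = 0"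
proof -
  assume i: "i < n"
  have "rho i 0 = rho i 0 + rho i 0" using rho_add[OF i SS(1) SS(1)] by simp
  then show ?thesis using add_cancel_right_right by metis
qed

lemma rho_diff: "i < n \<Longrightarrow> x \<in> S \<Longrightarrow> y \<in> S \<Longrightarrow> rho i (x - y) = rho i x - rho i y"
  using rho_add[of i "x - y" y] SS(4) by (simp add: algebra_simps)

lemma rho_eq_iff: "i < n \<Longrightarrow> x \<in> S \<Longrightarrow> y \<in> S \<Longrightarrow> rho i x = rho i y \<longleftrightarrow> x - y \<in> m i"
proof -
  assume a: "i < n" "x \<in> S" "y \<in> S"
  have "rho i x = rho i y \<longleftrightarrow> m i +>\<^bsub>ringS S\<^esub> x = m i +>\<^bsub>ringS S\<^esub> y"
  proof
    assume "rho i x = rho i y" then show "m i +>\<^bsub>ringS S\<^esub> x = m i +>\<^bsub>ringS S\<^esub> y"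
      using rho[OF a(1,2)] rho[OF a(1,3)] by simp
  next
    assume "m i +>\<^bsub>ringS S\<^esub> x = m i +>\<^bsub>ringS S\<^esub> y"
    then show "rho i x = rho i y" using rho_unique[OF a(1,2), of "rho i y"] rho[OF a(1,3)] by simp
  qed
  also have "\<dots> \<longleftrightarrow> x - y \<in> m i" using rcos_eq[OF subS mideal[OF a(1)] a(2,3)] .
  finally show ?thesis .
qed

lemma rho_zero_iff: "i < n \<Longrightarrow> x \<in> S \<Longrightarrow> rho i x = 0 \<longleftrightarrow> x \<in> m i"
  using rho_eq_iff[of i x 0] rho_zero SS(1) by simp

lemma rho_surj: "i < n \<Longrightarrow> \<exists>s\<in>S. rho i s = c"
proof -
  assume i: "i < n"
  have "\<alpha> i c \<in> carrier (ringS S Quot m i)" using alpha_bij[OF i] unfolding bij_betw_def by blast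
  then obtain s where "s \<in> S" "\<alpha> i c = m i +>\<^bsub>ringS S\<^esub> s" unfolding quot_carrier by blast
  then show ?thesis using rho_unique[OF i] by blast
qed

lemma rho_prod: "i < n \<Longrightarrow> (\<And>k. k \<in> K \<Longrightarrow> f k \<in> S) \<Longrightarrow> rho i (prod f K) = (\<Prod>k\<in>K. rho i (f k))"
proof (induction K rule: infinite_finite_induct)
  case (insert x F)
  then show ?case using rho_mult[of i "f x" "prod f F"] sub_prod[OF subS, of F f] by simp
qed (auto simp: rho_one)

lemma rho_pow: "i < n \<Longrightarrow> x \<in> S \<Longrightarrow> rho i (x ^ k) = rho i x ^ k"
  by (induction k) (auto simp: rho_one rho_mult sub_pow[OF subS])

definition R where "R = pullback_ring S n m \<alpha>"

lemma R_def': "R = {s \<in> S. \<exists>c. \<forall>i<n. rho i s = c}"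
proof -
  have "(\<forall>i<n. m i +>\<^bsub>ringS S\<^esub> s = \<alpha> i c) \<longleftrightarrow> (\<forall>i<n. rho i s = c)" if "s \<in> S" for s c
    using rho_unique[OF _ that] rho[OF _ that] by metis
  then show ?thesis unfolding R_def pullback_ring_def by auto
qed

end


lemma ideal_sum:
  assumes "subring_of A" "ideal_in A I" "ideal_in A K"
  shows "ideal_in A {a + b | a b. a \<in> I \<and> b \<in> K}"
  unfolding ideal_in_def
proof (intro conjI ballI)
  note I = ideal_simps[OF assms(2)] and K = ideal_simps[OF assms(3)]
  show "{a + b |a b. a \<in> I \<and> b \<in> K} \<subseteq> A" using I(1) K(1) sub_simps(3)[OF assms(1)] by blast
  show "0 \<in> {a + b |a b. a \<in> I \<and> b \<in> K}" using I(2) K(2) by force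
  fix x y assume "x \<in> {a + b |a b. a \<in> I \<and> b \<in> K}" "y \<in> {a + b |a b. a \<in> I \<and> b \<in> K}"
  then obtain a b a' b' where "x = a + b" "y = a' + b'" "a \<in> I" "b \<in> K" "a' \<in> I" "b' \<in> K" by blast
  moreover then have "x + y = (a + a') + (b + b')" by (simp add: algebra_simps)
  ultimately show "x + y \<in> {a + b |a b. a \<in> I \<and> b \<in> K}" using I(3) K(3) by blast
next
  note I = ideal_simps[OF assms(2)] and K = ideal_simps[OF assms(3)]
  fix r x assume "r \<in> A" "x \<in> {a + b |a b. a \<in> I \<and> b \<in> K}"
  then obtain a b where "x = a + b" "a \<in> I" "b \<in> K" by blast
  moreover then have "r * x = r * a + r * b" by (simp add: algebra_simps)
  ultimately show "r * x \<in> {a + b |a b. a \<in> I \<and> b \<in> K}" using I(4) K(4) \<open>r \<in> A\<close> by blast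
qed

context pb begin

lemma comax:
  assumes "i < n" "j < n" "i \<noteq> j"
  shows "\<exists>a\<in>m i. \<exists>b\<in>m j. 1 = a + b"
proof -
  define K where "K = {a + b | a b. a \<in> m i \<and> b \<in> m j}"
  have K: "ideal_in S K" unfolding K_def by (rule ideal_sum[OF subS mideal mideal]) (use assms in auto)
  have "m i \<subseteq> K" unfolding K_def using ideal_simps(2)[OF mideal[OF assms(2)]] by force
  then have "K = m i \<or> K = S" using mmax[OF assms(1)] K unfolding maximal_in_def by blast
  moreover have "K \<noteq> m i"
  proof
    assume "K = m i"
    moreover have "m j \<subseteq> K" unfolding K_def using ideal_simps(2)[OF mideal[OF assms(1)]] by force
    ultimately have "m j \<subseteq> m i" by simp
    then have "m i = m j \<or> m i = S" using mmax[OF assms(2)] mideal[OF assms(1)] unfolding maximal_in_def by blast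
    then show False using mdist[OF assms] mone[OF assms(1)] SS(2) by blast
  qed
  ultimately have "1 \<in> K" using SS(2) by simp
  then show ?thesis unfolding K_def by blast
qed

lemma rho_sum: "i < n \<Longrightarrow> (\<And>k. k \<in> K \<Longrightarrow> f k \<in> S) \<Longrightarrow> rho i (sum f K) = (\<Sum>k\<in>K. rho i (f k))"
proof (induction K rule: infinite_finite_induct)
  case (insert x F)
  then show ?case using rho_add[of i "f x" "sum f F"] sub_sum[OF subS, of F f] by simp
qed (auto simp: rho_zero)

lemma idem: "i < n \<Longrightarrow> \<exists>e\<in>S. rho i e = 1 \<and> (\<forall>j<n. j \<noteq> i \<longrightarrow> rho j e = 0)"
proof -
  assume i: "i < n"
  have "\<forall>j\<in>{..<n} - {i}. \<exists>b. b \<in> m j \<and> 1 - b \<in> m i"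
  proof
    fix j assume "j \<in> {..<n} - {i}"
    then obtain a b where "a \<in> m i" "b \<in> m j" "1 = a + b" using comax[OF i, of j] by auto
    moreover then have "1 - b = a" by (metis add_diff_cancel_right')
    ultimately show "\<exists>b. b \<in> m j \<and> 1 - b \<in> m i" by (intro exI[of _ b]) simp
  qed
  then obtain b where b0: "\<forall>j\<in>{..<n} - {i}. b j \<in> m j \<and> 1 - b j \<in> m i" by (metis bchoice)
  then have b: "\<And>j. j \<in> {..<n} - {i} \<Longrightarrow> b j \<in> m j \<and> 1 - b j \<in> m i" by blast
  have bS: "j \<in> {..<n} - {i} \<Longrightarrow> b j \<in> S" for j using b msub by blast
  define e where "e = prod b ({..<n} - {i})"
  have "e \<in> S" unfolding e_def using bS by (intro sub_prod[OF subS])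
  moreover have "rho i e = 1"
  proof -
    have "rho i (b j) = 1" if "j \<in> {..<n} - {i}" for j
    proof -
      have "rho i (1 - b j) = 0" using rho_zero_iff[OF i] b[OF that] SS(2) bS[OF that] SS(4) by blast
      then show ?thesis using rho_diff[OF i SS(2) bS[OF that]] rho_one[OF i] by simp
    qed
    then have "rho i e = (\<Prod>k\<in>{..<n} - {i}. 1)" unfolding e_def using rho_prod[OF i, of _ b] bS
      by (metis (no_types, lifting) prod.cong)
    then show ?thesis by simp
  qed
  moreover have "rho j e = 0" if "j < n" "j \<noteq> i" for j
  proof -
    have "e \<in> m j" unfolding e_def using that b bS
      by (intro ideal_prod[OF subS mideal[OF that(1)], of _ j]) auto
    then show ?thesis using rho_zero_iff[OF that(1)] \<open>e \<in> S\<close> by blast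
  qed
  ultimately show ?thesis by blast
qed

lemma R_mem: "s \<in> S \<Longrightarrow> (\<And>i. i < n \<Longrightarrow> rho i s = c) \<Longrightarrow> s \<in> R"
  unfolding R_def' by blast

lemma R_rho: "s \<in> R \<Longrightarrow> \<exists>c. \<forall>i<n. rho i s = c"
  unfolding R_def' by blast

lemma RS: "R \<subseteq> S" unfolding R_def' by blast

lemma const: "\<exists>t\<in>R. \<forall>i<n. rho i t = c"
proof -
  have "\<forall>i\<in>{..<n}. \<exists>e. e \<in> S \<and> rho i e = 1 \<and> (\<forall>j<n. j \<noteq> i \<longrightarrow> rho j e = 0)" using idem by blast
  then obtain e where e0: "\<forall>i\<in>{..<n}. e i \<in> S \<and> rho i (e i) = 1 \<and> (\<forall>j<n. j \<noteq> i \<longrightarrow> rho j (e i) = 0)"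
    by (metis bchoice)
  then have e: "\<And>i. i < n \<Longrightarrow> e i \<in> S \<and> rho i (e i) = 1 \<and> (\<forall>j<n. j \<noteq> i \<longrightarrow> rho j (e i) = 0)" by blast
  have "\<forall>i\<in>{..<n}. \<exists>s. s \<in> S \<and> rho i s = c" using rho_surj by blast
  then obtain \<beta> where \<beta>0: "\<forall>i\<in>{..<n}. \<beta> i \<in> S \<and> rho i (\<beta> i) = c" by (metis bchoice)
  then have \<beta>: "\<And>i. i < n \<Longrightarrow> \<beta> i \<in> S \<and> rho i (\<beta> i) = c" by blast
  define t where "t = (\<Sum>i<n. e i * \<beta> i)"
  have eb: "i < n \<Longrightarrow> e i * \<beta> i \<in> S" for i using e \<beta> SS(5) by blast
  have tS: "t \<in> S" unfolding t_def using eb by (intro sub_sum[OF subS]) auto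
  have "rho j t = c" if j: "j < n" for j
  proof -
    have "rho j t = (\<Sum>i<n. rho j (e i * \<beta> i))" unfolding t_def using rho_sum[OF j, of "{..<n}"] eb by simp
    also have "\<dots> = (\<Sum>i<n. if i = j then c else 0)"
    proof (rule sum.cong)
      fix i assume "i \<in> {..<n}"
      then show "rho j (e i * \<beta> i) = (if i = j then c else 0)"
        using rho_mult[OF j, of "e i" "\<beta> i"] e[of i] \<beta>[of i] j by auto
    qed simp
    also have "\<dots> = c" using j by simp
    finally show ?thesis .
  qed
  then show ?thesis using R_mem[OF tS] by blast
qed

end

context pb begin
lemma subR: "subring_of R"
  unfolding subring_of_def
proof (intro conjI ballI)
  show "0 \<in> R" using R_mem[OF SS(1)] rho_zero by blast
  show "1 \<in> R" using R_mem[OF SS(2)] rho_one by blast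
  fix x y assume x: "x \<in> R" and y: "y \<in> R"
  obtain c d where c: "\<forall>i<n. rho i x = c" and d: "\<forall>i<n. rho i y = d" using R_rho x y by blast
  have xy: "x \<in> S" "y \<in> S" using x y RS by auto
  show "x + y \<in> R" using c d by (intro R_mem[OF SS(3)[OF xy], of "c + d"]) (simp add: rho_add[OF _ xy])
  show "x - y \<in> R" using c d by (intro R_mem[OF SS(4)[OF xy], of "c - d"]) (simp add: rho_diff[OF _ xy])
  show "x * y \<in> R" using c d by (intro R_mem[OF SS(5)[OF xy], of "c * d"]) (simp add: rho_mult[OF _ xy])
qed

definition J where "J = {s \<in> S. \<forall>i<n. s \<in> m i}"

lemma J_rho: "s \<in> J \<longleftrightarrow> s \<in> S \<and> (\<forall>i<n. rho i s = 0)"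
  unfolding J_def using rho_zero_iff by blast

lemma JR: "J \<subseteq> R" using J_rho R_mem by blast

lemma JS: "J \<subseteq> S" unfolding J_def by blast

lemma J_m: "i < n \<Longrightarrow> J \<subseteq> m i" unfolding J_def by blast

lemma J_idealS: "ideal_in S J"
  unfolding ideal_in_def
proof (intro conjI ballI)
  show "J \<subseteq> S" by (rule JS)
  show "0 \<in> J" unfolding J_def using SS(1) ideal_simps(2)[OF mideal] by blast
  fix x y assume "x \<in> J" "y \<in> J" then show "x + y \<in> J"
    unfolding J_def using SS(3) ideal_simps(3)[OF mideal] by blast
next
  fix a x assume "a \<in> S" "x \<in> J" then show "a * x \<in> J"
    unfolding J_def using SS(5) ideal_simps(4)[OF mideal] by blast
qed

lemma J_mult: "a \<in> S \<Longrightarrow> x \<in> J \<Longrightarrow> a * x \<in> J" using ideal_simps(4)[OF J_idealS] .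

lemma J_idealR: "ideal_in R J"
  using J_idealS JR RS unfolding ideal_in_def by blast

lemma one_J: "1 \<notin> J" using J_m[of 0] mone[of 0] n2 by auto

lemma S_unit: "s \<in> S \<Longrightarrow> (\<And>i. i < n \<Longrightarrow> s \<notin> m i) \<Longrightarrow> inverse s \<in> S"
  using nonunit_in_maximal[OF subS] max_iff by blast

lemma R_unit:
  assumes r: "r \<in> R" "r \<notin> J"
  shows "inverse r \<in> R"
proof -
  obtain c where c: "\<forall>i<n. rho i r = c" using R_rho r by blast
  have rS: "r \<in> S" using r RS by auto
  have "c \<noteq> 0" using c r J_rho rS by auto
  then have nm: "i < n \<Longrightarrow> r \<notin> m i" for i using c rho_zero_iff[of i r] rS by auto
  have iS: "inverse r \<in> S" using S_unit[OF rS nm] .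
  have r0: "r \<noteq> 0" using nm[of 0] n2 ideal_simps(2)[OF mideal, of 0] by auto
  have "rho i (inverse r) = inverse c" if "i < n" for i
  proof -
    have "rho i (inverse r) * c = 1"
      using rho_mult[OF that iS rS] rho_one[OF that] r0 c that by simp
    then show ?thesis by (metis inverse_unique mult.commute)
  qed
  then show ?thesis using R_mem[OF iS] by blast
qed

end

context pb begin
lemma J_ne: "\<exists>j\<in>J. j \<noteq> 0"
proof -
  have "\<forall>i<n. \<exists>x\<in>m i. x \<noteq> 0"
  proof (intro allI impI)
    fix i assume i: "i < n"
    have "height_ge2 S (m i)" using ht i by simp
    then obtain P0 P1 where P': "prime_in S P0 \<and> prime_in S P1 \<and> P0 \<subset> P1 \<and> P1 \<subset> m i"
      unfolding height_ge2_def by (elim exE)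
    then have P: "prime_in S P0" "P0 \<subset> P1" "P1 \<subset> m i" by auto
    have "0 \<in> P0" using ideal_simps(2)[OF prime_ideal[OF P(1)]] .
    obtain x where "x \<in> P1" "x \<notin> P0" using P(2) by blast
    then have "x \<in> m i" "x \<noteq> 0" using P(3) \<open>0 \<in> P0\<close> by (blast, blast)
    then show "\<exists>x\<in>m i. x \<noteq> 0" by blast
  qed
  then have "\<forall>i\<in>{..<n}. \<exists>x. x \<in> m i \<and> x \<noteq> 0" by blast
  then obtain x where "\<forall>i\<in>{..<n}. x i \<in> m i \<and> x i \<noteq> 0" by (metis bchoice)
  then have x: "\<And>i. i < n \<Longrightarrow> x i \<in> m i \<and> x i \<noteq> 0" by simp
  have xS: "i < n \<Longrightarrow> x i \<in> S" for i using x msub by blast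
  define j where "j = prod x {..<n}"
  have "j \<in> S" unfolding j_def using xS by (intro sub_prod[OF subS]) auto
  moreover have "j \<in> m i" if i: "i < n" for i
    unfolding j_def using x xS i by (intro ideal_prod[OF subS mideal[OF i], of _ i]) auto
  ultimately have "j \<in> J" unfolding J_def by blast
  moreover have "j \<noteq> 0" unfolding j_def using x by (simp add: prod_zero_iff)
  ultimately show ?thesis by blast
qed

end

context pb begin
lemma R_ne_S: "\<exists>s\<in>S. s \<notin> R"
proof -
  obtain e where e: "e \<in> S" "rho 0 e = 1" "rho 1 e = 0" using idem[of 0] n2 by force
  have "e \<notin> R"
  proof
    assume "e \<in> R"
    then obtain c where "\<forall>i<n. rho i e = c" using R_rho by blast
    then have "rho 0 e = rho 1 e" using n2 by simp
    then show False using e by simp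
  qed
  then show ?thesis using e by blast
qed

lemma J_max: "maximal_in R J"
  unfolding maximal_in_def
proof (intro conjI allI impI)
  show "ideal_in R J" by (rule J_idealR)
  show "J \<noteq> R" using one_J subR sub_simps(2) by blast
  fix K assume K: "ideal_in R K \<and> J \<subseteq> K"
  show "K = J \<or> K = R"
  proof (cases "K \<subseteq> J")
    case True then show ?thesis using K by blast
  next
    case False
    then obtain r where r: "r \<in> K" "r \<notin> J" by blast
    then have "r \<in> R" using K ideal_simps(1) by blast
    then have "inverse r * r \<in> K" using r R_unit K ideal_simps(4) by blast
    moreover have "r \<noteq> 0" using r J_idealR ideal_simps(2) by blast
    ultimately have "1 \<in> K" by simp
    then show ?thesis using ideal_one[OF subR] K by blast
  qed
qed

lemma R_ideal_J: "ideal_in R I \<Longrightarrow> 1 \<notin> I \<Longrightarrow> I \<subseteq> J"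
proof
  fix x assume I: "ideal_in R I" "1 \<notin> I" and x: "x \<in> I"
  show "x \<in> J"
  proof (rule ccontr)
    assume "x \<notin> J"
    moreover have "x \<in> R" using I x ideal_simps(1) by blast
    ultimately have "inverse x * x \<in> I" using R_unit I x ideal_simps(4) by blast
    moreover have "x \<noteq> 0" using \<open>x \<notin> J\<close> J_idealR ideal_simps(2) by blast
    ultimately show False using I by simp
  qed
qed

lemma R_local: "local_ring R"
  unfolding local_ring_def
proof (rule ex1I[of _ J])
  show "maximal_in R J" by (rule J_max)
  fix M assume M: "maximal_in R M"
  have "1 \<notin> M" using prime_one[OF subR maximal_prime[OF subR M]] .
  then have "M \<subseteq> J" using R_ideal_J M unfolding maximal_in_def by blast
  moreover have "J \<noteq> R" using one_J subR sub_simps(2) by blast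
  ultimately show "M = J" using M J_idealR unfolding maximal_in_def by blast
qed

end


lemma int_inverse:
  assumes A: "subring_of A" and y: "y \<in> A" "y * x = 1"
    and eq: "x ^ k + (\<Sum>i<k. c i * x ^ i) = 0" and c: "\<And>i. i < k \<Longrightarrow> c i \<in> A"
  shows "x \<in> A"
proof (cases k)
  case 0 then show ?thesis using eq by simp
next
  case (Suc k')
  have pw: "x ^ i * y ^ k' = y ^ (k' - i)" if "i \<le> k'" for i
  proof -
    have "y ^ k' = y ^ i * y ^ (k' - i)" using that by (simp add: power_add[symmetric])
    then have "x ^ i * y ^ k' = (y * x) ^ i * y ^ (k' - i)" by (simp add: power_mult_distrib algebra_simps)
    then show ?thesis using y by simp
  qed
  have e1: "(x ^ k + (\<Sum>i<k. c i * x ^ i)) * y ^ k' = x ^ k * y ^ k' + (\<Sum>i<k. c i * (x ^ i * y ^ k'))"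
    by (simp add: distrib_right sum_distrib_right mult.assoc)
  have e2: "x ^ k * y ^ k' = x" using pw[of k'] Suc by (simp add: mult.assoc)
  have e3: "(\<Sum>i<k. c i * (x ^ i * y ^ k')) = (\<Sum>i<k. c i * y ^ (k' - i))"
    by (rule sum.cong) (use pw Suc in auto)
  have "0 = x + (\<Sum>i<k. c i * y ^ (k' - i))" using e1 e2 e3 eq by simp
  then have "x = - (\<Sum>i<k. c i * y ^ (k' - i))" by (simp add: eq_neg_iff_add_eq_0 add.commute)
  moreover have "(\<Sum>i<k. c i * y ^ (k' - i)) \<in> A"
    using c y sub_pow[OF A] sub_simps(5)[OF A] by (intro sub_sum[OF A]) auto
  ultimately show ?thesis using sub_neg[OF A] by simp
qed

lemma integral_mono: "A \<subseteq> B \<Longrightarrow> integral_over A x \<Longrightarrow> integral_over B x"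
  unfolding integral_over_def by blast

lemma coeff_mult_in:
  assumes A: "subring_of A" and p: "\<And>i. coeff p i \<in> A" and q: "\<And>i. coeff q i \<in> A"
  shows "coeff (p * q) k \<in> A"
  unfolding coeff_mult using p q sub_simps(5)[OF A] by (intro sub_sum[OF A]) auto

lemma coeff_prod_in:
  assumes A: "subring_of A" and p: "\<And>j i. j \<in> K \<Longrightarrow> coeff (f j) i \<in> A"
  shows "coeff (prod f K) k \<in> A"
  using p
proof (induction K arbitrary: k rule: infinite_finite_induct)
  case (infinite K) then show ?case using sub_simps(1,2)[OF A] by (simp add: coeff_1)
next
  case empty then show ?case using sub_simps(1,2)[OF A] by (simp add: coeff_1)
next
  case (insert x F)
  then show ?case using coeff_mult_in[OF A, of "f x" "prod f F"] by simp
qed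

lemma integral_of_poly:
  assumes A: "subring_of A" and c: "\<And>i. coeff p i \<in> A" and l: "lead_coeff p = 1" and z: "poly p x = 0"
  shows "integral_over A x"
proof -
  have "poly p x = (\<Sum>i<Suc (degree p). coeff p i * x ^ i)"
    unfolding poly_altdef by (simp add: lessThan_Suc_atMost)
  also have "\<dots> = x ^ degree p + (\<Sum>i<degree p. coeff p i * x ^ i)" using l by simp
  finally show ?thesis unfolding integral_over_def using z c by (intro exI[of _ "degree p"] exI[of _ "coeff p"]) auto
qed

context pb begin

lemma fracR: "Defs.frac R = Defs.frac S"
proof
  show "Defs.frac R \<subseteq> Defs.frac S" using frac_mono[OF RS] .
  show "Defs.frac S \<subseteq> Defs.frac R"
  proof
    fix x assume "x \<in> Defs.frac S"
    then obtain a b where ab: "a \<in> S" "b \<in> S" "b \<noteq> 0" "x = a / b" unfolding Defs.frac_def by blast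
    obtain j where j: "j \<in> J" "j \<noteq> 0" using J_ne by blast
    have "x = (a * j) / (b * j)" using ab j by simp
    moreover have "a * j \<in> R" "b * j \<in> R" using J_mult[OF ab(1) j(1)] J_mult[OF ab(2) j(1)] JR
      by (auto simp: mult.commute)
    moreover have "b * j \<noteq> 0" using ab j by simp
    ultimately show "x \<in> Defs.frac R" using frac_mem[of "a * j" R "b * j" x] by blast
  qed
qed

lemma S_int: assumes s: "s \<in> S" shows "integral_over R s"
proof -
  have "\<forall>i\<in>{..<n}. \<exists>t. t \<in> R \<and> (\<forall>j<n. rho j t = rho i s)" using const by blast
  then obtain t where "\<forall>i\<in>{..<n}. t i \<in> R \<and> (\<forall>j<n. rho j (t i) = rho i s)" by (metis bchoice)
  then have t: "\<And>i. i < n \<Longrightarrow> t i \<in> R" "\<And>i j. i < n \<Longrightarrow> j < n \<Longrightarrow> rho j (t i) = rho i s" by auto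
  have tS: "i < n \<Longrightarrow> t i \<in> S" for i using t RS by auto
  define p0 where "p0 = (\<Prod>i<n. [:- t i, 1:])"
  define r where "r = (\<Prod>i<n. s - t i)"
  have r: "poly p0 s = r" unfolding p0_def r_def by (simp add: poly_prod)
  have rS: "r \<in> S" unfolding r_def using s tS SS(4) by (intro sub_prod[OF subS]) auto
  have "r \<in> m j" if j: "j < n" for j
  proof -
    have "s - t j \<in> m j" using rho_eq_iff[OF j s tS[OF j]] t(2)[OF j j] by simp
    then show ?thesis unfolding r_def using j s tS SS(4)
      by (intro ideal_prod[OF subS mideal[OF j], of _ j]) auto
  qed
  then have rR: "r \<in> R" using rS JR unfolding J_def by blast
  define p where "p = p0 + [:- r:]"
  have c0: "coeff p0 k \<in> R" for k unfolding p0_def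
    using t(1) sub_neg[OF subR] sub_simps(1,2)[OF subR]
    by (intro coeff_prod_in[OF subR]) (auto simp: coeff_pCons split: nat.splits)
  have "coeff p k \<in> R" for k unfolding p_def
    using c0[of k] rR sub_neg[OF subR] sub_simps(1,3,4)[OF subR] by (cases k) auto
  moreover have dp0: "degree p0 = n" unfolding p0_def by (subst degree_prod_eq_sum_degree) auto
  moreover have "lead_coeff p0 = 1" unfolding p0_def by (simp add: lead_coeff_prod)
  moreover have "degree p = n" unfolding p_def using dp0 n2 by (subst degree_add_eq_left) auto
  moreover have "coeff [:- r:] n = 0" using n2 by (cases n) simp_all
  ultimately have lc: "lead_coeff p = 1" "\<And>k. coeff p k \<in> R" unfolding p_def by auto
  have "poly p s = 0" unfolding p_def using r by simp
  then show ?thesis using integral_of_poly[OF subR lc(2) lc(1)] by blast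
qed

lemma gk_int:
  assumes x: "x \<in> Defs.frac S" and xi: "integral_over S x"
  shows "x \<in> S"
proof -
  have "x \<in> loc_prime S P" if P: "height_one S P" for P
  proof -
    have Pp: "prime_in S P" using P unfolding height_one_def by blast
    define V where "V = loc_prime S P"
    have V: "valuation_domain V" using gk P unfolding gen_krull_def R1_def V_def by blast
    have subV: "subring_of V" using V unfolding valuation_domain_def by blast
    have SV: "S \<subseteq> V" unfolding V_def using loc_prime_sub[OF subS Pp] .
    have xV: "x \<in> Defs.frac V" using x frac_mono[OF SV] by blast
    show "x \<in> loc_prime S P"
    proof (cases "x = 0")
      case True then show ?thesis using SV SS(1) V_def by auto
    next
      case False
      then have "x \<in> V \<or> inverse x \<in> V" using V xV unfolding valuation_domain_def by blast
      moreover
      { assume "inverse x \<in> V"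
        obtain k c where kc: "\<forall>i<k. c i \<in> S" "x ^ k + (\<Sum>i<k. c i * x ^ i) = 0"
          using xi unfolding integral_over_def by blast
        have "x \<in> V" using int_inverse[OF subV \<open>inverse x \<in> V\<close> _ kc(2)] False kc(1) SV by auto }
      ultimately show ?thesis unfolding V_def by blast
    qed
  qed
  moreover have "x \<in> Defs.frac S" by (rule x)
  ultimately show ?thesis using gk unfolding gen_krull_def by blast
qed

lemma int_closure: "integral_closure R = S"
proof
  show "integral_closure R \<subseteq> S"
  proof
    fix x assume "x \<in> integral_closure R"
    then have "x \<in> Defs.frac S" "integral_over S x" unfolding integral_closure_def fracR
      using integral_mono[OF RS] by auto
    then show "x \<in> S" using gk_int by blast
  qed
  show "S \<subseteq> integral_closure R"
    unfolding integral_closure_def fracR using S_int frac_sub[OF subS] by blast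
qed

lemma not_int_closed: "\<not> integrally_closed R"
  unfolding integrally_closed_def int_closure using R_ne_S RS by blast

end


lemma val_sub: "valuation_domain V \<Longrightarrow> subring_of V"
  unfolding valuation_domain_def by blast

lemma val_cmp:
  assumes V: "valuation_domain V" and ab: "a \<in> V" "b \<in> V" "a \<noteq> 0" "b \<noteq> 0"
  shows "a / b \<in> V \<or> b / a \<in> V"
proof -
  have "a / b \<in> Defs.frac V" using ab by (intro frac_mem[of a V b]) auto
  moreover have "a / b \<noteq> 0" using ab by simp
  ultimately have "a / b \<in> V \<or> inverse (a / b) \<in> V" using V unfolding valuation_domain_def by blast
  then show ?thesis by simp
qed

lemma height_one_prime: "height_one S q \<Longrightarrow> prime_in S q"
  unfolding height_one_def by blast

lemma loc_prime_nonunit: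
  assumes "subring_of S" "prime_in S q" "s \<in> q" "s \<noteq> 0"
  shows "inverse s \<notin> loc_prime S q"
proof
  assume "inverse s \<in> loc_prime S q"
  then obtain a b where ab: "a \<in> S" "b \<in> S" "b \<notin> q" "inverse s = a / b"
    unfolding loc_prime_def loc_def by blast
  then have "b \<noteq> 0" using ideal_simps(2)[OF prime_ideal[OF assms(2)]] by auto
  then have "b = s * a" using ab(4) assms(4) by (simp add: field_simps)
  moreover have "s * a \<in> q" using ideal_simps(5)[OF prime_ideal[OF assms(2)]] assms(3) ab(1) by blast
  ultimately show False using ab(3) by simp
qed

lemma loc_prime_mem: "a \<in> S \<Longrightarrow> b \<in> S \<Longrightarrow> b \<notin> q \<Longrightarrow> x = a / b \<Longrightarrow> x \<in> loc_prime S q"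
  unfolding loc_prime_def by (rule loc_mem) auto

lemma loc_prime_elim:
  assumes "x \<in> loc_prime S q"
  obtains a b where "a \<in> S" "b \<in> S" "b \<notin> q" "x = a / b"
  using assms unfolding loc_prime_def loc_def by blast

lemma archimedean:
  assumes S: "subring_of S" and h: "height_one S q" and V: "valuation_domain (loc_prime S q)"
    and y: "y \<in> loc_prime S q" "y \<noteq> 0" "inverse y \<notin> loc_prime S q"
    and w: "w \<in> loc_prime S q" "w \<noteq> 0"
  shows "\<exists>N v. v \<in> loc_prime S q \<and> y ^ N = w * v"
proof (rule ccontr)
  define V where "V = loc_prime S q"
  assume "\<not> (\<exists>N v. v \<in> loc_prime S q \<and> y ^ N = w * v)"
  then have nw: "\<And>N v. v \<in> V \<Longrightarrow> y ^ N \<noteq> w * v" unfolding V_def by blast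
  have qp: "prime_in S q" using h height_one_prime by blast
  have subV: "subring_of V" using V val_sub V_def by blast
  note SV = sub_simps[OF subV]
  have SsV: "S \<subseteq> V" unfolding V_def using loc_prime_sub[OF S qp] .
  have yV: "y \<in> V" "inverse y \<notin> V" using y V_def by auto
  have powV: "y ^ N \<in> V" for N using sub_pow[OF subV yV(1)] .
  have pow0: "y ^ N \<noteq> 0" for N using y by simp
  define I where "I = {x \<in> V. \<forall>N. \<exists>v\<in>V. x = y ^ N * v}"
  have wI: "w \<in> I"
  proof -
    have "\<exists>v\<in>V. w = y ^ N * v" for N
    proof -
      have "w / y ^ N \<in> V \<or> y ^ N / w \<in> V" using val_cmp[OF V, of w "y ^ N"] w powV pow0 V_def by auto
      moreover have "y ^ N / w \<notin> V" using nw[of "y ^ N / w" N] w by auto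
      ultimately have "w / y ^ N \<in> V" by blast
      moreover have "w = y ^ N * (w / y ^ N)" using pow0 by simp
      ultimately show ?thesis by blast
    qed
    then show ?thesis unfolding I_def using w V_def by blast
  qed
  have Imem: "x \<in> I \<Longrightarrow> \<exists>v\<in>V. x = y ^ N * v" for x N unfolding I_def by blast
  have notI: "x \<in> V \<Longrightarrow> x \<notin> I \<Longrightarrow> \<exists>N u. u \<in> V \<and> y ^ N = x * u \<and> x \<noteq> 0" for x
  proof -
    assume x: "x \<in> V" "x \<notin> I"
    then obtain N where N: "\<not> (\<exists>v\<in>V. x = y ^ N * v)" unfolding I_def by blast
    have x0: "x \<noteq> 0"
    proof
      assume "x = 0" then have "x = y ^ N * 0" by simp
      then show False using N SV(1) by blast
    qed
    have "x / y ^ N \<in> V \<or> y ^ N / x \<in> V" using val_cmp[OF V, of x "y ^ N"] x x0 powV pow0 V_def by auto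
    moreover have "x / y ^ N \<notin> V"
    proof
      assume "x / y ^ N \<in> V"
      moreover have "x = y ^ N * (x / y ^ N)" using pow0[of N] by simp
      ultimately show False using N by blast
    qed
    ultimately have "y ^ N / x \<in> V" by blast
    moreover have "y ^ N = x * (y ^ N / x)" using x0 by simp
    ultimately show ?thesis using x0 by blast
  qed
  have Iideal: "ideal_in V I"
    unfolding ideal_in_def
  proof (intro conjI ballI)
    show "I \<subseteq> V" unfolding I_def by blast
    show "0 \<in> I" unfolding I_def using SV(1) by (auto intro: bexI[of _ 0])
    fix a b assume "a \<in> I" "b \<in> I"
    have "\<exists>v\<in>V. a + b = y ^ N * v" for N
    proof -
      obtain v where v: "v \<in> V" "a = y ^ N * v" using Imem \<open>a \<in> I\<close> by blast
      obtain v' where v': "v' \<in> V" "b = y ^ N * v'" using Imem \<open>b \<in> I\<close> by blast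
      have "a + b = y ^ N * (v + v')" using v v' by (simp add: distrib_left)
      then show ?thesis using SV(3)[OF v(1) v'(1)] by blast
    qed
    moreover have "a + b \<in> V" using SV(3) \<open>a \<in> I\<close> \<open>b \<in> I\<close> unfolding I_def by blast
    ultimately show "a + b \<in> I" unfolding I_def by blast
  next
    fix r a assume "r \<in> V" "a \<in> I"
    have "\<exists>v\<in>V. r * a = y ^ N * v" for N
    proof -
      obtain v where v: "v \<in> V" "a = y ^ N * v" using Imem \<open>a \<in> I\<close> by blast
      have "r * a = y ^ N * (r * v)" using v by (simp add: algebra_simps)
      then show ?thesis using SV(5)[OF \<open>r \<in> V\<close> v(1)] by blast
    qed
    moreover have "r * a \<in> V" using SV(5) \<open>r \<in> V\<close> \<open>a \<in> I\<close> unfolding I_def by blast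
    ultimately show "r * a \<in> I" unfolding I_def by blast
  qed
  have one_I: "1 \<notin> I"
  proof
    assume "1 \<in> I"
    then obtain v where "v \<in> V" "1 = y ^ 1 * v" using Imem by blast
    then have "inverse y = v" by (metis inverse_unique power_one_right)
    then show False using yV \<open>v \<in> V\<close> by simp
  qed
  have Iprime: "a \<in> I \<or> b \<in> I" if ab: "a \<in> V" "b \<in> V" "a * b \<in> I" for a b
  proof (rule ccontr)
    assume "\<not> (a \<in> I \<or> b \<in> I)"
    then have "a \<notin> I" "b \<notin> I" by auto
    obtain A u where A: "u \<in> V" "y ^ A = a * u" using notI[OF ab(1) \<open>a \<notin> I\<close>] by blast
    obtain B u' where B: "u' \<in> V" "y ^ B = b * u'" using notI[OF ab(2) \<open>b \<notin> I\<close>] by blast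
    obtain v where v: "v \<in> V" "a * b = y ^ (A + B + 1) * v" using Imem[OF ab(3)] by blast
    have "y ^ (A + B) = (a * b) * (u * u')" using A B by (simp add: power_add algebra_simps)
    also have "\<dots> = y ^ (A + B) * (y * (v * u * u'))" using v by (simp add: algebra_simps)
    finally have "1 = y * (v * u * u')" using pow0[of "A + B"] y(2) by simp
    then have "inverse y = v * u * u'" by (metis inverse_unique)
    moreover have "v * u * u' \<in> V" using SV(5) A B v by blast
    ultimately show False using yV by simp
  qed
  define I' where "I' = I \<inter> S"
  have I'p: "prime_in S I'"
    unfolding prime_in_def ideal_in_def
  proof (intro conjI ballI impI)
    show "I' \<subseteq> S" unfolding I'_def by blast
    show "0 \<in> I'" unfolding I'_def using ideal_simps(2)[OF Iideal] sub_simps(1)[OF S] by blast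
    show "I' \<noteq> S" using one_I sub_simps(2)[OF S] unfolding I'_def by blast
    fix a b assume "a \<in> I'" "b \<in> I'" then show "a + b \<in> I'"
      unfolding I'_def using ideal_simps(3)[OF Iideal] sub_simps(3)[OF S] by blast
  next
    fix r a assume "r \<in> S" "a \<in> I'" then show "r * a \<in> I'"
      unfolding I'_def using ideal_simps(4)[OF Iideal] sub_simps(5)[OF S] SsV by blast
  next
    fix a b assume "a \<in> S" "b \<in> S" "a * b \<in> I'" then show "a \<in> I' \<or> b \<in> I'"
      unfolding I'_def using Iprime SsV by blast
  qed
  have I'q: "I' \<subseteq> q"
  proof
    fix a assume a: "a \<in> I'"
    show "a \<in> q"
    proof (rule ccontr)
      assume "a \<notin> q"
      then have ia: "inverse a \<in> V" using loc_prime_inv[OF S] a unfolding V_def I'_def by blast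
      obtain v where v: "v \<in> V" "a = y ^ 1 * v" using Imem a unfolding I'_def by blast
      have a0: "a \<noteq> 0" using \<open>a \<notin> q\<close> ideal_simps(2)[OF prime_ideal[OF qp]] by auto
      then have "inverse y = v * inverse a" using v by (simp add: field_simps)
      moreover have "v * inverse a \<in> V" using SV(5) v ia by blast
      ultimately show False using yV by simp
    qed
  qed
  have qI': "\<not> q \<subseteq> I'"
  proof
    assume qI: "q \<subseteq> I'"
    obtain a b where ab: "a \<in> S" "b \<in> S" "b \<notin> q" "y = a / b" using loc_prime_elim y(1) by blast
    have b0: "b \<noteq> 0" using ab ideal_simps(2)[OF prime_ideal[OF qp]] by auto
    have "a \<in> q"
    proof (rule ccontr)
      assume "a \<notin> q"
      then have "inverse a \<in> V" using loc_prime_inv[OF S] ab unfolding V_def by blast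
      moreover have "a \<noteq> 0" using ab b0 y(2) by auto
      then have "inverse y = b * inverse a" using ab b0 y(2) by (simp add: field_simps)
      ultimately show False using SV(5) SsV ab(2) yV by auto
    qed
    then have "a \<in> I" using qI unfolding I'_def by blast
    moreover have "inverse b \<in> V" using loc_prime_inv[OF S] ab unfolding V_def by blast
    ultimately have "inverse b * a \<in> I" using ideal_simps(4)[OF Iideal] by blast
    then have "y \<in> I" using ab by (simp add: divide_inverse mult.commute)
    then obtain v where v: "v \<in> V" "y = y ^ 2 * v" using Imem by blast
    then have "1 = y * v" using y(2) by (simp add: power2_eq_square)
    then have "inverse y = v" by (metis inverse_unique)
    then show False using v yV by simp
  qed
  have "\<exists>a\<in>I'. a \<noteq> 0"
  proof -
    obtain a b where ab: "a \<in> S" "b \<in> S" "b \<notin> q" "w = a / b" using loc_prime_elim w(1) unfolding V_def by blast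
    have b0: "b \<noteq> 0" using ab ideal_simps(2)[OF prime_ideal[OF qp]] by auto
    have "a = b * w" using ab b0 by simp
    moreover have "b * w \<in> I" using ideal_simps(4)[OF Iideal] wI SsV ab(2) by blast
    moreover have "a \<noteq> 0" using ab w(2) by auto
    ultimately have "a \<in> I'" "a \<noteq> 0" using ab(1) unfolding I'_def by auto
    then show ?thesis by blast
  qed
  then have "{0} \<subset> I'" using I'p ideal_simps(2)[OF prime_ideal] by blast
  moreover have "I' \<subset> q" using I'q qI' by blast
  ultimately have "height_ge2 S q" unfolding height_ge2_def using zero_prime[OF S] I'p by blast
  then show False using h unfolding height_one_def by blast
qed

lemma power_mult_loc:
  assumes S: "subring_of S" and h: "height_one S q" and V: "valuation_domain (loc_prime S q)"
    and s: "s \<in> q" "s \<noteq> 0" and x: "x \<in> Defs.frac S" "x \<noteq> 0"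
  shows "\<exists>N. s ^ N * x \<in> loc_prime S q"
proof -
  have qp: "prime_in S q" using h height_one_prime by blast
  have SsV: "S \<subseteq> loc_prime S q" using loc_prime_sub[OF S qp] .
  show ?thesis
  proof (cases "x \<in> loc_prime S q")
    case True then show ?thesis by (intro exI[of _ 0]) simp
  next
    case False
    have "x \<in> Defs.frac (loc_prime S q)" using x frac_mono[OF SsV] by blast
    then have ix: "inverse x \<in> loc_prime S q" using False V x unfolding valuation_domain_def by blast
    have sq: "s \<in> S" using s ideal_simps(1)[OF prime_ideal[OF qp]] by blast
    obtain N v where "v \<in> loc_prime S q" "s ^ N = inverse x * v"
      using archimedean[OF S h V _ s(2) loc_prime_nonunit[OF S qp s] ix] sq SsV x(2) by auto
    then have "s ^ N * x = v" using x(2) by simp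
    then show ?thesis using \<open>v \<in> loc_prime S q\<close> by blast
  qed
qed


lemma gk_sub: "gen_krull S \<Longrightarrow> subring_of S" unfolding gen_krull_def by blast

lemma gk_val: "gen_krull S \<Longrightarrow> height_one S P \<Longrightarrow> valuation_domain (loc_prime S P)"
  unfolding gen_krull_def R1_def by blast

lemma gk_mem:
  assumes "gen_krull S" "x \<in> Defs.frac S" "\<And>P. height_one S P \<Longrightarrow> x \<in> loc_prime S P"
  shows "x \<in> S"
proof -
  have "S = Defs.frac S \<inter> \<Inter>{loc_prime S P | P. height_one S P}" using assms(1) unfolding gen_krull_def by blast
  moreover have "x \<in> \<Inter>{loc_prime S P | P. height_one S P}" using assms(3) by blast
  ultimately show ?thesis using assms(2) by blast
qed

lemma gk_fin: "gen_krull S \<Longrightarrow> x \<in> S \<Longrightarrow> x \<noteq> 0 \<Longrightarrow> finite {P. height_one S P \<and> x \<in> P}"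
  unfolding gen_krull_def by blast

lemma krull_loc:
  assumes gk: "gen_krull S" and qp: "prime_in S q" and x: "x \<in> Defs.frac S"
    and hyp: "\<And>P. height_one S P \<Longrightarrow> P \<subseteq> q \<Longrightarrow> x \<in> loc_prime S P"
  shows "x \<in> loc_prime S q"
proof -
  have S: "subring_of S" using gk gk_sub by blast
  have q0: "0 \<in> q" using ideal_simps(2)[OF prime_ideal[OF qp]] .
  show ?thesis
  proof (cases "x = 0")
    case True then show ?thesis using loc_prime_sub[OF S qp] sub_simps(1)[OF S] by auto
  next
    case x0: False
    obtain a b where ab: "a \<in> S" "b \<in> S" "b \<noteq> 0" "x = a / b" using x unfolding Defs.frac_def by blast
    define B where "B = {P. height_one S P \<and> b \<in> P \<and> \<not> P \<subseteq> q}"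
    have finB: "finite B" unfolding B_def
      by (rule finite_subset[OF _ gk_fin[OF gk ab(2,3)]]) blast
    have "\<forall>P\<in>B. \<exists>u. u \<in> S - q \<and> u * x \<in> loc_prime S P"
    proof
      fix P assume P: "P \<in> B"
      then have h: "height_one S P" and nq: "\<not> P \<subseteq> q" unfolding B_def by auto
      then obtain s where s: "s \<in> P" "s \<notin> q" by blast
      have s0: "s \<noteq> 0" using s q0 by auto
      have sS: "s \<in> S" using s ideal_simps(1)[OF prime_ideal[OF height_one_prime[OF h]]] by blast
      obtain N where N: "s ^ N * x \<in> loc_prime S P"
        using power_mult_loc[OF S h gk_val[OF gk h] s(1) s0 x x0] by blast
      have "s ^ N \<in> S - q" using sub_pow[OF S sS] prime_pow[OF qp S sS s(2)] by blast
      then show "\<exists>u. u \<in> S - q \<and> u * x \<in> loc_prime S P" using N by blast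
    qed
    then obtain u where u0: "\<forall>P\<in>B. u P \<in> S - q \<and> u P * x \<in> loc_prime S P" by (metis bchoice)
    then have u: "\<And>P. P \<in> B \<Longrightarrow> u P \<in> S - q" "\<And>P. P \<in> B \<Longrightarrow> u P * x \<in> loc_prime S P" by auto
    define U where "U = prod u B"
    have U: "U \<in> S - q" unfolding U_def using prime_prod[OF S qp u(1)] .
    have "U * x \<in> loc_prime S P" if h: "height_one S P" for P
    proof -
      have Pp: "prime_in S P" using height_one_prime[OF h] .
      have subV: "subring_of (loc_prime S P)" using loc_prime_subring[OF S Pp] .
      have SV: "S \<subseteq> loc_prime S P" using loc_prime_sub[OF S Pp] .
      show ?thesis
      proof (cases "P \<in> B")
        case True
        have "U = u P * prod u (B - {P})" unfolding U_def using finB True by (simp add: prod.remove)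
        then have "U * x = (u P * x) * prod u (B - {P})" by (simp add: algebra_simps)
        moreover have "prod u (B - {P}) \<in> S" using u(1) by (intro sub_prod[OF S]) auto
        moreover have "(u P * x) * prod u (B - {P}) \<in> loc_prime S P"
          using sub_simps(5)[OF subV u(2)[OF True]] SV calculation(2) by blast
        ultimately show ?thesis by (metis mult.commute mult.left_commute)
      next
        case False
        have "x \<in> loc_prime S P"
        proof (cases "b \<in> P")
          case True
          then have "P \<subseteq> q" using False h unfolding B_def by blast
          then show ?thesis using hyp h by blast
        next
          case False
          show ?thesis using loc_prime_mem[OF ab(1,2) False ab(4)] .
        qed
        then show ?thesis using sub_simps(5)[OF subV] U SV by blast
      qed
    qed
    moreover have "U * x \<in> Defs.frac S"
    proof -
      have "U * x = (U * a) / b" using ab by simp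
      moreover have "U * a \<in> S" using U ab sub_simps(5)[OF S] by blast
      ultimately show ?thesis using ab by (intro frac_mem[of "U * a" S b]) auto
    qed
    ultimately have Ux: "U * x \<in> S" using gk_mem[OF gk] by blast
    have "U \<noteq> 0" using U q0 by auto
    then have "x = (U * x) / U" by simp
    then show ?thesis using loc_prime_mem[OF Ux _ _] U by blast
  qed
qed


lemma contr_prime:
  assumes A: "subring_of A" and AB: "A \<subseteq> B" and Q: "prime_in B Q"
  shows "prime_in A (Q \<inter> A)"
  unfolding prime_in_def ideal_in_def
proof (intro conjI ballI impI)
  note I = ideal_simps[OF prime_ideal[OF Q]]
  show "Q \<inter> A \<subseteq> A" by blast
  show "0 \<in> Q \<inter> A" using I(2) sub_simps(1)[OF A] by blast
  show "Q \<inter> A \<noteq> A"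
  proof
    assume "Q \<inter> A = A"
    then have "1 \<in> Q" using sub_simps(2)[OF A] by blast
    then show False using Q unfolding prime_in_def using ideal_simps(1,5)[OF prime_ideal[OF Q]]
      by (metis mult_1 subsetI subset_antisym)
  qed
  fix x y assume "x \<in> Q \<inter> A" "y \<in> Q \<inter> A"
  then show "x + y \<in> Q \<inter> A" using I(3) sub_simps(3)[OF A] by blast
next
  note I = ideal_simps[OF prime_ideal[OF Q]]
  fix a x assume "a \<in> A" "x \<in> Q \<inter> A"
  then show "a * x \<in> Q \<inter> A" using I(4) sub_simps(5)[OF A] AB by blast
next
  fix a b assume "a \<in> A" "b \<in> A" "a * b \<in> Q \<inter> A"
  then show "a \<in> Q \<inter> A \<or> b \<in> Q \<inter> A" using prime_mult[OF Q] AB by blast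
qed

context pb begin

lemma subT_S: "subring_of T \<Longrightarrow> R \<subseteq> T \<Longrightarrow> S \<subseteq> T \<Longrightarrow> True" by simp

lemma contrR: "prime_in S q \<Longrightarrow> prime_in R (q \<inter> R)"
  using contr_prime[OF subR RS] .

lemma Jprime: "prime_in R J" using maximal_prime[OF subR J_max] .

lemma contr_sub_J: "prime_in R P \<Longrightarrow> P \<subseteq> J"
  using R_ideal_J prime_one[OF subR] prime_ideal by blast

lemma m_contr: "i < n \<Longrightarrow> m i \<inter> R = J"
proof -
  assume i: "i < n"
  have "J \<subseteq> m i \<inter> R" using J_m[OF i] JR by blast
  moreover have "m i \<inter> R \<subseteq> J" using contr_sub_J[OF contrR[OF mprime[OF i]]] .
  ultimately show ?thesis by blast
qed

lemma nonmax_J: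
  assumes q: "prime_in S q" and nm: "\<And>i. i < n \<Longrightarrow> q \<noteq> m i"
  shows "\<exists>j\<in>J. j \<notin> q"
proof (rule ccontr)
  assume "\<not> (\<exists>j\<in>J. j \<notin> q)"
  then have Jq: "J \<subseteq> q" by blast
  have "\<exists>x. x \<in> m i \<and> x \<notin> q" if i: "i < n" for i
  proof (rule ccontr)
    assume "\<not> (\<exists>x. x \<in> m i \<and> x \<notin> q)"
    then have "m i \<subseteq> q" by blast
    moreover have "q \<noteq> S" using q unfolding prime_in_def by blast
    ultimately have "q = m i" using mmax[OF i] prime_ideal[OF q] unfolding maximal_in_def by blast
    then show False using nm i by blast
  qed
  then have "\<forall>i\<in>{..<n}. \<exists>x. x \<in> m i \<and> x \<notin> q" by blast
  then obtain x where "\<forall>i\<in>{..<n}. x i \<in> m i \<and> x i \<notin> q" by (metis bchoice)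
  then have x: "\<And>i. i < n \<Longrightarrow> x i \<in> m i \<and> x i \<notin> q" by simp
  have xS: "i < n \<Longrightarrow> x i \<in> S" for i using x msub by blast
  have "prod x {..<n} \<in> S - q" using x xS by (intro prime_prod[OF subS q]) auto
  moreover have "prod x {..<n} \<in> J"
  proof -
    have "prod x {..<n} \<in> m i" if i: "i < n" for i
      using x xS i by (intro ideal_prod[OF subS mideal[OF i], of _ i]) auto
    then show ?thesis unfolding J_def using \<open>prod x {..<n} \<in> S - q\<close> by blast
  qed
  ultimately show False using Jq by blast
qed

lemma loc_corr:
  assumes q: "prime_in S q" and j: "j \<in> J" "j \<notin> q"
  shows "loc_prime S q = loc_prime R (q \<inter> R)"
proof
  show "loc_prime S q \<subseteq> loc_prime R (q \<inter> R)"
  proof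
    fix x assume "x \<in> loc_prime S q"
    then obtain a b where ab: "a \<in> S" "b \<in> S" "b \<notin> q" "x = a / b" using loc_prime_elim by blast
    have j0: "j \<noteq> 0" using j ideal_simps(2)[OF prime_ideal[OF q]] by auto
    have "x = (a * j) / (b * j)" using ab j0 by simp
    moreover have "a * j \<in> R" "b * j \<in> R" using J_mult[OF ab(1) j(1)] J_mult[OF ab(2) j(1)] JR by auto
    moreover have "b * j \<notin> q" using prime_mult[OF q ab(2)] j ab JS by blast
    ultimately show "x \<in> loc_prime R (q \<inter> R)" using loc_prime_mem[of "a * j" R "b * j" "q \<inter> R" x] by blast
  qed
  show "loc_prime R (q \<inter> R) \<subseteq> loc_prime S q"
  proof
    fix x assume "x \<in> loc_prime R (q \<inter> R)"
    then obtain a b where ab: "a \<in> R" "b \<in> R" "b \<notin> q \<inter> R" "x = a / b" using loc_prime_elim by blast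
    then show "x \<in> loc_prime S q" using loc_prime_mem[of a S b q x] RS by blast
  qed
qed

lemma ht1_nonmax: "height_one S q \<Longrightarrow> i < n \<Longrightarrow> q \<noteq> m i"
  using ht unfolding height_one_def by blast

lemma contr_ne_J:
  assumes "prime_in S q" "\<And>i. i < n \<Longrightarrow> q \<noteq> m i"
  shows "q \<inter> R \<noteq> J"
  using nonmax_J[OF assms] JR by blast

lemma contr_inj:
  assumes a: "prime_in S a" and b: "prime_in S b" and eq: "a \<inter> R = b \<inter> R" and ne: "a \<inter> R \<noteq> J"
  shows "a = b"
proof -
  have "a \<inter> R \<subseteq> J" using contr_sub_J[OF contrR[OF a]] .
  then obtain j where j: "j \<in> J" "j \<notin> a \<inter> R" using ne by blast
  then have ja: "j \<notin> a" and jb: "j \<notin> b" using JR eq by blast+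
  have jS: "j \<in> S" using j JS by blast
  have "s \<in> a \<longleftrightarrow> s \<in> b" if s: "s \<in> S" for s
  proof -
    have sj: "s * j \<in> R" using J_mult[OF s j(1)] JR by blast
    have "s \<in> a \<longleftrightarrow> s * j \<in> a"
      using prime_mult[OF a s jS] ja ideal_simps(5)[OF prime_ideal[OF a] jS] by blast
    also have "\<dots> \<longleftrightarrow> s * j \<in> b" using eq sj by blast
    also have "\<dots> \<longleftrightarrow> s \<in> b"
      using prime_mult[OF b s jS] jb ideal_simps(5)[OF prime_ideal[OF b] jS] by blast
    finally show ?thesis .
  qed
  moreover have "a \<subseteq> S" "b \<subseteq> S" using ideal_simps(1)[OF prime_ideal] a b by blast+
  ultimately show ?thesis by blast
qed

lemma lift:
  assumes P: "prime_in R P" and ne: "P \<noteq> J"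
  shows "\<exists>q. prime_in S q \<and> q \<inter> R = P \<and> (\<forall>i<n. q \<noteq> m i)"
proof -
  have "P \<subseteq> J" using contr_sub_J[OF P] .
  then obtain j where j: "j \<in> J" "j \<notin> P" using ne by blast
  have jR: "j \<in> R" and jS: "j \<in> S" using j JR JS by auto
  note PI = ideal_simps[OF prime_ideal[OF P]]
  define q where "q = {s \<in> S. s * j \<in> P}"
  have sjR: "s \<in> S \<Longrightarrow> s * j \<in> R" for s using J_mult[OF _ j(1)] JR by blast
  have qp: "prime_in S q"
    unfolding prime_in_def ideal_in_def
  proof (intro conjI ballI impI)
    show "q \<subseteq> S" unfolding q_def by blast
    show "0 \<in> q" unfolding q_def using SS(1) PI(2) by simp
    show "q \<noteq> S"
    proof
      assume "q = S" then have "1 \<in> q" using SS(2) by simp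
      then show False using j unfolding q_def by simp
    qed
    fix x y assume "x \<in> q" "y \<in> q"
    then show "x + y \<in> q" unfolding q_def using SS(3) PI(3) by (auto simp: distrib_right)
  next
    fix r x assume r: "r \<in> S" and x: "x \<in> q"
    then have xj: "x * j \<in> P" "x \<in> S" unfolding q_def by auto
    have "(r * x * j) * j = (r * j) * (x * j)" by (simp add: algebra_simps)
    moreover have "(r * j) * (x * j) \<in> P" using PI(4)[OF sjR[OF r] xj(1)] .
    ultimately have "(r * x * j) * j \<in> P" by metis
    then have "r * x * j \<in> P" using prime_mult[OF P sjR[OF SS(5)[OF r xj(2)]] jR] j(2) by blast
    then show "r * x \<in> q" unfolding q_def using SS(5)[OF r xj(2)] by simp
  next
    fix x y assume x: "x \<in> S" and y: "y \<in> S" and xy: "x * y \<in> q"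
    have "(x * j) * (y * j) = (x * y * j) * j" by (simp add: algebra_simps)
    moreover have "(x * y * j) * j \<in> P" using xy PI(5)[OF jR] unfolding q_def by blast
    ultimately have "x * j \<in> P \<or> y * j \<in> P" using prime_mult[OF P sjR[OF x] sjR[OF y]] by metis
    then show "x \<in> q \<or> y \<in> q" unfolding q_def using x y by blast
  qed
  have "q \<inter> R = P"
  proof
    show "q \<inter> R \<subseteq> P"
    proof
      fix r assume "r \<in> q \<inter> R"
      then have "r * j \<in> P" "r \<in> R" unfolding q_def by auto
      then show "r \<in> P" using prime_mult[OF P _ jR] j(2) by blast
    qed
    show "P \<subseteq> q \<inter> R"
    proof
      fix r assume "r \<in> P"
      then have "r \<in> R" "r * j \<in> P" using PI(1,5) jR by auto
      then show "r \<in> q \<inter> R" unfolding q_def using RS by blast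
    qed
  qed
  moreover have "\<forall>i<n. q \<noteq> m i" using m_contr \<open>q \<inter> R = P\<close> ne by blast
  ultimately show ?thesis using qp by blast
qed

lemma lemV:
  assumes h: "height_one S q" and T: "subring_of T" "R \<subseteq> T" "T \<subseteq> Defs.frac R"
    and Q: "prime_in T Q" "Q \<inter> R = q \<inter> R"
  shows "T \<subseteq> loc_prime S q"
proof
  fix x assume xT: "x \<in> T"
  have qp: "prime_in S q" using height_one_prime[OF h] .
  obtain j where j: "j \<in> J" "j \<notin> q" using nonmax_J[OF qp ht1_nonmax[OF h]] by blast
  define V where "V = loc_prime S q"
  have Veq: "V = loc_prime R (q \<inter> R)" unfolding V_def using loc_corr[OF qp j] .
  have Vval: "valuation_domain V" unfolding V_def using gk_val[OF gk h] .
  have subV: "subring_of V" using val_sub[OF Vval] .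
  have SV: "S \<subseteq> V" unfolding V_def using loc_prime_sub[OF subS qp] .
  show "x \<in> loc_prime S q"
  proof (rule ccontr)
    assume xV: "x \<notin> loc_prime S q"
    have x0: "x \<noteq> 0" using xV SV SS(1) V_def by auto
    have "x \<in> Defs.frac V" using xT T(3) frac_mono[of R V] RS SV by blast
    then have yV: "inverse x \<in> V" using Vval x0 xV V_def unfolding valuation_domain_def by blast
    obtain Q0 where "prime_in S Q0" "Q0 \<subset> q" using h unfolding height_one_def by blast
    then obtain w where w: "w \<in> q" "w \<noteq> 0" using ideal_simps(2)[OF prime_ideal] by blast
    have wS: "w \<in> S" using w ideal_simps(1)[OF prime_ideal[OF qp]] by blast
    define z where "z = j * w"
    have zR: "z \<in> R" unfolding z_def using J_mult[OF wS j(1)] JR by (simp add: mult.commute) blast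
    have zq: "z \<in> q" unfolding z_def using ideal_simps(4)[OF prime_ideal[OF qp]] j(1) JS w(1) by blast
    have z0: "z \<noteq> 0" unfolding z_def using w j ideal_simps(2)[OF prime_ideal[OF qp]] by auto
    obtain N v where Nv: "v \<in> V" "inverse x ^ N = z * v"
      using archimedean[OF subS h gk_val[OF gk h], of "inverse x" z] yV x0 xV zR RS SV V_def z0 by auto
    obtain a b where ab: "a \<in> R" "b \<in> R" "b \<notin> q \<inter> R" "v = a / b"
      using Nv(1) Veq loc_prime_elim by blast
    have b0: "b \<noteq> 0" using ab ideal_simps(2)[OF prime_ideal[OF qp]] sub_simps(1)[OF subR] by auto
    have "1 = z * v * x ^ N" using Nv(2) x0 by (metis nonzero_mult_div_cancel_left power_inverse divide_inverse_commute mult.commute right_inverse power_not_zero zero_neq_one)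
    then have "b = z * (a * x ^ N)" using ab b0 by (simp add: field_simps)
    moreover have "z \<in> Q" using zR zq Q(2) by blast
    moreover have "a * x ^ N \<in> T" using T ab xT sub_simps(5)[OF T(1)] sub_pow[OF T(1)] by blast
    ultimately have "b \<in> Q" using ideal_simps(5)[OF prime_ideal[OF Q(1)]] by simp
    then show False using ab Q(2) by blast
  qed
qed

end


context pb begin

lemma gd_use:
  assumes "going_down A B" "prime_in A p" "prime_in A q" "p \<subset> q" "prime_in B Q" "Q \<inter> A = q"
  shows "\<exists>P. prime_in B P \<and> P \<subseteq> Q \<and> P \<inter> A = p"
  using assms unfolding going_down_def by blast

lemma ht1_below:
  assumes gd: "going_down R T" and Q: "prime_in T Q" "Q \<inter> R = J" and h: "height_one S q"
  shows "\<exists>P. prime_in T P \<and> P \<subseteq> Q \<and> P \<inter> R = q \<inter> R"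
proof -
  have qp: "prime_in S q" using height_one_prime[OF h] .
  have p: "prime_in R (q \<inter> R)" using contrR[OF qp] .
  have "q \<inter> R \<subset> J" using contr_sub_J[OF p] contr_ne_J[OF qp ht1_nonmax[OF h]] by blast
  then show ?thesis using gd_use[OF gd p Jprime _ Q] by blast
qed

lemma T_sub_S:
  assumes T: "subring_of T" "R \<subseteq> T" "T \<subseteq> Defs.frac R" and gd: "going_down R T"
    and Q: "prime_in T Q" "Q \<inter> R = J"
  shows "T \<subseteq> S"
proof
  fix x assume x: "x \<in> T"
  have "x \<in> loc_prime S P" if h: "height_one S P" for P
  proof -
    obtain P' where "prime_in T P'" "P' \<inter> R = P \<inter> R" using ht1_below[OF gd Q h] by blast
    then show ?thesis using lemV[OF h T] x by blast
  qed
  moreover have "x \<in> Defs.frac S" using x T(3) fracR by blast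
  ultimately show "x \<in> S" using gk_mem[OF gk] by blast
qed

lemma catch:
  assumes T: "subring_of T" "R \<subseteq> T" "T \<subseteq> Defs.frac R" and gd: "going_down R T"
    and Q: "prime_in T Q" "Q \<inter> R = J"
    and u: "u \<in> T" "u \<in> m k" "k < n" "u \<noteq> 0"
  shows "u \<in> Q"
proof -
  have uS: "u \<in> S" using u msub by blast
  have "inverse u \<notin> S"
  proof
    assume "inverse u \<in> S"
    then have "inverse u * u \<in> m k" using ideal_simps(4)[OF mideal[OF u(3)]] u(2) by blast
    then show False using u(4) mone[OF u(3)] by simp
  qed
  moreover have "inverse u \<in> Defs.frac S" using uS u(4) SS(2) by (intro frac_mem[of 1 S u]) (auto simp: divide_inverse)
  ultimately obtain P where h: "height_one S P" and nP: "inverse u \<notin> loc_prime S P"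
    using gk_mem[OF gk] by blast
  have Pp: "prime_in S P" using height_one_prime[OF h] .
  have uP: "u \<in> P" using loc_prime_inv[OF subS uS] nP by blast
  obtain P' where P': "prime_in T P'" "P' \<subseteq> Q" "P' \<inter> R = P \<inter> R" using ht1_below[OF gd Q h] by blast
  obtain j where j: "j \<in> J" "j \<notin> P" using nonmax_J[OF Pp ht1_nonmax[OF h]] by blast
  have "u \<in> loc_prime R (P \<inter> R)" using lemV[OF h T P'(1,3)] u(1) loc_corr[OF Pp j] by blast
  then obtain a b where ab: "a \<in> R" "b \<in> R" "b \<notin> P \<inter> R" "u = a / b" using loc_prime_elim by blast
  have b0: "b \<noteq> 0" using ab ideal_simps(2)[OF prime_ideal[OF Pp]] sub_simps(1)[OF subR] by auto
  have ub: "u * b = a" using ab b0 by simp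
  have "u * b \<in> P" using ideal_simps(5)[OF prime_ideal[OF Pp] _ uP] ab RS by blast
  then have "a \<in> P'" using ub ab(1) P'(3) by blast
  then have "u * b \<in> P'" using ub by simp
  moreover have "b \<notin> P'" using ab P'(3) by blast
  ultimately have "u \<in> P'" using prime_mult[OF P'(1) u(1)] ab(2) T(2) by blast
  then show ?thesis using P'(2) by blast
qed

lemma TR:
  assumes T: "subring_of T" "R \<subseteq> T" "T \<subseteq> Defs.frac R" and gd: "going_down R T"
    and Q: "prime_in T Q" "Q \<inter> R = J"
  shows "T = R"
proof
  show "R \<subseteq> T" by (rule T(2))
  have TS: "T \<subseteq> S" using T_sub_S[OF T gd Q] .
  show "T \<subseteq> R"
  proof
    fix t assume tT: "t \<in> T"
    show "t \<in> R"
    proof (rule ccontr)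
      assume tR: "t \<notin> R"
      have n0: "0 < n" using n2 by simp
      have tS: "t \<in> S" using tT TS by blast
      obtain t0 where t0: "t0 \<in> R" "\<And>i. i < n \<Longrightarrow> rho i t0 = rho 0 t" using const by blast
      define e where "e = t - t0"
      have eT: "e \<in> T" unfolding e_def using tT t0 T(2) sub_simps(4)[OF T(1)] by blast
      have eS: "e \<in> S" using eT TS by blast
      have t0S: "t0 \<in> S" using t0 RS by blast
      have rhoe: "i < n \<Longrightarrow> rho i e = rho i t - rho 0 t" for i unfolding e_def using rho_diff[OF _ tS t0S] t0 by simp
      have e00: "rho 0 e = 0" using rhoe[OF n0] by simp
      have "e \<notin> J"
      proof
        assume "e \<in> J"
        then have "e + t0 \<in> R" using JR t0 sub_simps(3)[OF subR] by blast
        then show False using tR unfolding e_def by simp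
      qed
      then obtain k where k: "k < n" "rho k e \<noteq> 0" using J_rho eS by blast
      define D where "D = (\<lambda>i. rho i e) ` {..<n} - {0}"
      have finD: "finite D" unfolding D_def by simp
      have D0: "0 \<notin> D" unfolding D_def by blast
      have Dmem: "i < n \<Longrightarrow> rho i e \<noteq> 0 \<Longrightarrow> rho i e \<in> D" for i unfolding D_def by blast
      have "\<forall>d\<in>D. \<exists>s. s \<in> R \<and> (\<forall>i<n. rho i s = d)" using const by blast
      then obtain c where "\<forall>d\<in>D. c d \<in> R \<and> (\<forall>i<n. rho i (c d) = d)" by (metis bchoice)
      then have c: "\<And>d. d \<in> D \<Longrightarrow> c d \<in> R" "\<And>d i. d \<in> D \<Longrightarrow> i < n \<Longrightarrow> rho i (c d) = d" by auto
      have cS: "d \<in> D \<Longrightarrow> c d \<in> S" for d using c RS by blast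
      define h where "h = (\<Prod>d\<in>D. e - c d)"
      have hT: "h \<in> T" unfolding h_def using eT c(1) T(2) sub_simps(4)[OF T(1)] by (intro sub_prod[OF T(1)]) blast
      have hS: "h \<in> S" using hT TS by blast
      have rhoh: "rho i h = (\<Prod>d\<in>D. rho i e - d)" if i: "i < n" for i
      proof -
        have "rho i h = (\<Prod>d\<in>D. rho i (e - c d))" unfolding h_def
          using rho_prod[OF i, of D "\<lambda>d. e - c d"] eS cS SS(4) by blast
        also have "\<dots> = (\<Prod>d\<in>D. rho i e - d)"
          by (rule prod.cong) (use rho_diff[OF i eS cS] c(2) i in auto)
        finally show ?thesis .
      qed
      have h_zero: "rho i h = 0" if "i < n" "rho i e \<noteq> 0" for i
        using rhoh[OF that(1)] Dmem[OF that] finD by (auto simp: prod_zero_iff)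
      have h_nz: "rho i h \<noteq> 0" if "i < n" "rho i e = 0" for i
        using rhoh[OF that(1)] that(2) finD D0 by (auto simp: prod_zero_iff)
      define g where "g = h + e"
      have gT: "g \<in> T" unfolding g_def using hT eT sub_simps(3)[OF T(1)] by blast
      have gS: "g \<in> S" using gT TS by blast
      have g_nz: "rho i g \<noteq> 0" if i: "i < n" for i
        using rho_add[OF i hS eS] h_zero[OF i] h_nz[OF i] unfolding g_def by (cases "rho i e = 0") auto
      have eQ: "e \<in> Q"
      proof (rule catch[OF T gd Q eT _ n0])
        show "e \<in> m 0" using rho_zero_iff[OF n0 eS] e00 by simp
        show "e \<noteq> 0" using k rho_zero by auto
      qed
      have hQ: "h \<in> Q"
      proof (rule catch[OF T gd Q hT _ k(1)])
        show "h \<in> m k" using rho_zero_iff[OF k(1) hS] h_zero[OF k] by simp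
        show "h \<noteq> 0" using h_nz[OF n0 e00] rho_zero[OF n0] by auto
      qed
      have gQ: "g \<in> Q" unfolding g_def using ideal_simps(3)[OF prime_ideal[OF Q(1)] hQ eQ] .
      have g0: "g \<noteq> 0" using g_nz[OF n0] rho_zero[OF n0] by auto
      have igS: "inverse g \<in> S" using S_unit[OF gS] g_nz rho_zero_iff gS by blast
      obtain kk cc where kc: "\<forall>i<kk. cc i \<in> R" "inverse g ^ kk + (\<Sum>i<kk. cc i * inverse g ^ i) = 0"
        using S_int[OF igS] unfolding integral_over_def by blast
      have "inverse g \<in> T"
        using int_inverse[OF T(1) gT _ kc(2)] g0 kc(1) T(2) by auto
      then have "inverse g * g \<in> Q" using ideal_simps(4)[OF prime_ideal[OF Q(1)] _ gQ] by blast
      then show False using g0 prime_one[OF T(1) Q(1)] by simp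
    qed
  qed
qed

lemma loc_R_J: "loc_prime R J = R"
proof
  show "R \<subseteq> loc_prime R J" using loc_prime_sub[OF subR Jprime] .
  show "loc_prime R J \<subseteq> R"
  proof
    fix x assume "x \<in> loc_prime R J"
    then obtain a b where ab: "a \<in> R" "b \<in> R" "b \<notin> J" "x = a / b" using loc_prime_elim by blast
    then have "a * inverse b \<in> R" using R_unit sub_simps(5)[OF subR] by blast
    then show "x \<in> R" using ab by (simp add: divide_inverse)
  qed
qed

theorem R_perinormal: "perinormal R"
  unfolding perinormal_def
proof (intro conjI allI impI)
  show "subring_of R" by (rule subR)
  fix T assume A: "overring R T \<and> local_ring T \<and> going_down R T"
  then have T: "subring_of T" "R \<subseteq> T" "T \<subseteq> Defs.frac R" and gd: "going_down R T" and lT: "local_ring T"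
    unfolding overring_def by auto
  obtain N where N: "maximal_in T N" using lT unfolding local_ring_def by blast
  have Np: "prime_in T N" using maximal_prime[OF T(1) N] .
  define P where "P = N \<inter> R"
  have Pp: "prime_in R P" unfolding P_def using contr_prime[OF subR T(2) Np] .
  show "\<exists>P. prime_in R P \<and> T = loc_prime R P"
  proof (cases "P = J")
    case True
    then have "T = R" using TR[OF T gd Np] unfolding P_def by blast
    then show ?thesis using loc_R_J Jprime by auto
  next
    case False
    obtain q where q: "prime_in S q" "q \<inter> R = P" "\<forall>i<n. q \<noteq> m i" using lift[OF Pp False] by blast
    obtain j where j: "j \<in> J" "j \<notin> q" using nonmax_J[OF q(1)] q(3) by blast
    have eq: "loc_prime S q = loc_prime R P" using loc_corr[OF q(1) j] q(2) by simp
    have "T = loc_prime R P"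
    proof
      show "loc_prime R P \<subseteq> T"
      proof
        fix x assume "x \<in> loc_prime R P"
        then obtain a b where ab: "a \<in> R" "b \<in> R" "b \<notin> P" "x = a / b" using loc_prime_elim by blast
        have "b \<in> T" "b \<notin> N" using ab T(2) P_def by auto
        then have "inverse b \<in> T" using local_unit[OF T(1) N lT] by blast
        then have "a * inverse b \<in> T" using sub_simps(5)[OF T(1)] ab T(2) by blast
        then show "x \<in> T" using ab by (simp add: divide_inverse)
      qed
      show "T \<subseteq> loc_prime R P"
      proof
        fix x assume xT: "x \<in> T"
        have "x \<in> loc_prime S q"
        proof (rule krull_loc[OF gk q(1)])
          show "x \<in> Defs.frac S" using xT T(3) fracR by blast
          fix q' assume h: "height_one S q'" and sub: "q' \<subseteq> q"
          have q'p: "prime_in S q'" using height_one_prime[OF h] .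
          have pp: "prime_in R (q' \<inter> R)" using contrR[OF q'p] .
          have "\<exists>Q'. prime_in T Q' \<and> Q' \<inter> R = q' \<inter> R"
          proof (cases "q' \<inter> R = P")
            case True then show ?thesis using Np P_def by blast
          next
            case False
            then have "q' \<inter> R \<subset> P" using sub q(2) by blast
            then show ?thesis using gd_use[OF gd pp Pp _ Np] P_def by blast
          qed
          then show "x \<in> loc_prime S q'" using lemV[OF h T] xT by blast
        qed
        then show "x \<in> loc_prime R P" using eq by simp
      qed
    qed
    then show ?thesis using Pp by blast
  qed
qed

end


context pb begin

lemma one_in:
  assumes T: "subring_of T" "R \<subseteq> T" and noQ: "\<not> (\<exists>Q. prime_in T Q \<and> Q \<inter> R = J)"
    and I: "ideal_in T I" "J \<subseteq> I"
  shows "1 \<in> I"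
proof (rule ccontr)
  assume "1 \<notin> I"
  then obtain M where M: "maximal_in T M" "I \<subseteq> M" using zorn_maximal[OF T(1) I(1)] by blast
  have Mp: "prime_in T M" using maximal_prime[OF T(1) M(1)] .
  have "prime_in R (M \<inter> R)" using contr_prime[OF subR T(2) Mp] .
  then have "M \<inter> R \<subseteq> J" using contr_sub_J by blast
  moreover have "J \<subseteq> M \<inter> R" using I(2) M(2) JR by blast
  ultimately show False using noQ Mp by blast
qed

theorem R_glob: "globally_perinormal S \<Longrightarrow> globally_perinormal R"
  unfolding globally_perinormal_def[of R]
proof (intro conjI allI impI)
  assume gS: "globally_perinormal S"
  show "subring_of R" by (rule subR)
  fix T assume A: "overring R T \<and> going_down R T"
  then have T: "subring_of T" "R \<subseteq> T" "T \<subseteq> Defs.frac R" and gd: "going_down R T"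
    unfolding overring_def by auto
  show "\<exists>M. multiplicative_in R M \<and> T = loc R M"
  proof (cases "\<exists>Q. prime_in T Q \<and> Q \<inter> R = J")
    case True
    then obtain Q where Q: "prime_in T Q" "Q \<inter> R = J" by blast
    have "T = R" using TR[OF T gd Q] .
    moreover have "loc R {1} = R" unfolding loc_def by auto
    moreover have "multiplicative_in R {1}" unfolding multiplicative_in_def using sub_simps(2)[OF subR] by simp
    ultimately show ?thesis by metis
  next
    case noQ: False
    define K where "K = {t \<in> T. \<forall>s\<in>S. s * t \<in> T}"
    have "ideal_in T K" unfolding ideal_in_def
    proof (intro conjI ballI)
      show "K \<subseteq> T" unfolding K_def by blast
      show "0 \<in> K" unfolding K_def using sub_simps(1)[OF T(1)] by simp
      fix x y assume "x \<in> K" "y \<in> K"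
      then show "x + y \<in> K" unfolding K_def using sub_simps(3)[OF T(1)] by (simp add: distrib_left)
    next
      fix r x assume "r \<in> T" "x \<in> K"
      then have "r * x \<in> T" "\<forall>s\<in>S. s * (r * x) \<in> T" unfolding K_def
        using sub_simps(5)[OF T(1)] by (auto simp: mult.left_commute[of _ r])
      then show "r * x \<in> K" unfolding K_def by blast
    qed
    moreover have "J \<subseteq> K" unfolding K_def using J_mult JR T(2) by blast
    ultimately have "1 \<in> K" using one_in[OF T(1,2) noQ] by blast
    then have ST: "S \<subseteq> T" unfolding K_def by auto
    have ovS: "overring S T" unfolding overring_def using T ST fracR by auto
    have gdS: "going_down S T" unfolding going_down_def
    proof (intro allI impI)
      fix p q Q assume a: "prime_in S p \<and> prime_in S q \<and> p \<subset> q \<and> prime_in T Q \<and> Q \<inter> S = q"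
      then have p: "prime_in S p" and q: "prime_in S q" and pq: "p \<subset> q" and Q: "prime_in T Q" "Q \<inter> S = q"
        by auto
      have QR: "Q \<inter> R = q \<inter> R" using Q(2) RS by blast
      have qnm: "q \<noteq> m i" if "i < n" for i
      proof
        assume "q = m i" then have "Q \<inter> R = J" using QR m_contr[OF that] by simp
        then show False using noQ Q(1) by blast
      qed
      have pnm: "p \<noteq> m i" if i: "i < n" for i
      proof
        assume "p = m i"
        then have "q = p \<or> q = S" using mmax[OF i] prime_ideal[OF q] pq unfolding maximal_in_def by blast
        then show False using pq q unfolding prime_in_def by blast
      qed
      have pJ: "p \<inter> R \<noteq> J" using contr_ne_J[OF p pnm] .
      have "p \<inter> R \<subset> q \<inter> R"
      proof -
        have "p \<inter> R \<subseteq> q \<inter> R" using pq by blast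
        moreover have "p \<inter> R \<noteq> q \<inter> R" using contr_inj[OF p q _ pJ] pq by blast
        ultimately show ?thesis by blast
      qed
      then obtain P where P: "prime_in T P" "P \<subseteq> Q" "P \<inter> R = p \<inter> R"
        using gd_use[OF gd contrR[OF p] contrR[OF q] _ Q(1) QR] by blast
      have PS: "prime_in S (P \<inter> S)" using contr_prime[OF subS ST P(1)] .
      have "(P \<inter> S) \<inter> R = p \<inter> R" using P(3) RS by blast
      then have "P \<inter> S = p" using contr_inj[OF PS p] pJ by blast
      then show "\<exists>P. prime_in T P \<and> P \<subseteq> Q \<and> P \<inter> S = p" using P by blast
    qed
    obtain M' where M': "multiplicative_in S M'" "T = loc S M'"
      using gS ovS gdS unfolding globally_perinormal_def by blast
    have M's: "M' \<subseteq> S" "1 \<in> M'" "0 \<notin> M'" "\<And>x y. x \<in> M' \<Longrightarrow> y \<in> M' \<Longrightarrow> x * y \<in> M'"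
      using M'(1) unfolding multiplicative_in_def by auto
    define K2 where "K2 = {t \<in> T. \<exists>w\<in>M'. w * t \<in> J}"
    have "ideal_in T K2" unfolding ideal_in_def
    proof (intro conjI ballI)
      show "K2 \<subseteq> T" unfolding K2_def by blast
      show "0 \<in> K2" unfolding K2_def using sub_simps(1)[OF T(1)] M's(2) ideal_simps(2)[OF J_idealS] by force
      fix x y assume "x \<in> K2" "y \<in> K2"
      then obtain w w' where w: "x \<in> T" "w \<in> M'" "w * x \<in> J" "y \<in> T" "w' \<in> M'" "w' * y \<in> J"
        unfolding K2_def by blast
      have "(w * w') * (x + y) = w' * (w * x) + w * (w' * y)" by (simp add: algebra_simps)
      moreover have "w' * (w * x) \<in> J" "w * (w' * y) \<in> J" using J_mult w M's(1) by blast+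
      ultimately have "(w * w') * (x + y) \<in> J" using ideal_simps(3)[OF J_idealS] by metis
      then show "x + y \<in> K2" unfolding K2_def using w M's(4) sub_simps(3)[OF T(1)] by blast
    next
      fix r x assume r: "r \<in> T" and "x \<in> K2"
      then obtain w where w: "x \<in> T" "w \<in> M'" "w * x \<in> J" unfolding K2_def by blast
      obtain c v where cv: "c \<in> S" "v \<in> M'" "r = c / v" using r M'(2) unfolding loc_def by blast
      have v0: "v \<noteq> 0" using cv M's by blast
      have "(v * w) * (r * x) = c * (w * x)" using cv v0 by (simp add: field_simps)
      moreover have "c * (w * x) \<in> J" using J_mult cv w by blast
      ultimately have "(v * w) * (r * x) \<in> J" by (simp only:)
      moreover have "v * w \<in> M'" using M's(4) cv w by blast
      moreover have "r * x \<in> T" using sub_simps(5)[OF T(1) r w(1)] .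
      ultimately show "r * x \<in> K2" unfolding K2_def by blast
    qed
    moreover have "J \<subseteq> K2" unfolding K2_def using JR T(2) M's(2) by force
    ultimately have "1 \<in> K2" using one_in[OF T(1,2) noQ] by blast
    then obtain W where W: "W \<in> M'" "W \<in> J" unfolding K2_def by auto
    define Mu where "Mu = {u \<in> R. u \<noteq> 0 \<and> inverse u \<in> T}"
    have "multiplicative_in R Mu" unfolding multiplicative_in_def Mu_def
      using sub_simps(2,5)[OF subR] sub_simps(2,5)[OF T(1)] by (auto simp: inverse_mult_distrib)
    moreover have "T = loc R Mu"
    proof
      show "loc R Mu \<subseteq> T"
      proof
        fix x assume "x \<in> loc R Mu"
        then obtain a u where "a \<in> R" "u \<in> Mu" "x = a / u" unfolding loc_def by blast
        then show "x \<in> T" unfolding Mu_def using T(2) sub_simps(5)[OF T(1)] by (auto simp: divide_inverse)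
      qed
      show "T \<subseteq> loc R Mu"
      proof
        fix t assume "t \<in> T"
        then obtain a m' where am: "a \<in> S" "m' \<in> M'" "t = a / m'" using M'(2) unfolding loc_def by blast
        define u where "u = m' * W"
        have uM: "u \<in> M'" unfolding u_def using M's(4) am W by blast
        have uJ: "u \<in> J" unfolding u_def using J_mult am(2) W(2) M's(1) by blast
        have u0: "u \<noteq> 0" using uM M's(3) by blast
        have m0: "m' \<noteq> 0" using am M's(3) by blast
        have "inverse u \<in> T" using M'(2) loc_inv[OF uM subS] by simp
        then have uMu: "u \<in> Mu" unfolding Mu_def using uJ JR u0 by blast
        have "u * t = a * W" unfolding u_def using am m0 by simp
        then have "u * t \<in> R" using J_mult[OF am(1) W(2)] JR by auto
        moreover have "t = (u * t) / u" using u0 by simp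
        ultimately show "t \<in> loc R Mu" using loc_mem uMu by blast
      qed
    qed
    ultimately show ?thesis by blast
  qed
qed

end

theorem theorem5p2:
  fixes S :: "'a::field set" and n :: nat and m :: "nat \<Rightarrow> 'a set"
    and \<alpha> :: "nat \<Rightarrow> 'b::field \<Rightarrow> 'a set"
  assumes "gen_krull S"
    and "n \<ge> 2"
    and "inj_on m {..<n}"
    and "{M. maximal_in S M} = m ` {..<n}"
    and "\<forall>j<n. height_ge2 S (m j)"
    and "\<forall>i<n. \<alpha> i \<in> ring_iso (ringS (UNIV :: 'b set)) (ringS S Quot m i)"
  shows "local_ring (pullback_ring S n m \<alpha>) \<and> perinormal (pullback_ring S n m \<alpha>)
       \<and> (globally_perinormal S \<longrightarrow> globally_perinormal (pullback_ring S n m \<alpha>))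
       \<and> \<not> integrally_closed (pullback_ring S n m \<alpha>)
       \<and> integral_closure (pullback_ring S n m \<alpha>) = S"
proof -
  interpret pb S n m \<alpha> using assms by unfold_locales
  show ?thesis using R_local R_perinormal R_glob not_int_closed int_closure unfolding R_def by blast
qed


end
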